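(* Let $W:\Omega^2\to[0,1]$ be a graphon. Then $\lim_{n\to\infty}\Pr[\mathbb{G}(n,W)\text{ is Hamiltonian}]=0$ if at least one of the following holds: (i) $W$ is not a connected graphon; (ii) $\lim_{\alpha\searrow0}\frac{\mu(\mathsf{D}_W(\alpha))}{\alpha}=\infty$; (iii) $W$ has a narrow peninsula; (iv) there is a measurable partition $\Omega=S\sqcup T$ with $\mu(S)=\mu(T)=\tfrac12$ such that $W=0$ almost everywhere on $(S\times S)\cup(T\times T)$.
   Context: $(\Omega,\mu)$ is an atomless standard probability space. A graphon is a symmetric measurable function $W:\Omega^2\to[0,1]$. The random graph $\mathbb{G}(n,W)$ on vertex set $[n]$ is generated by first sampling independent types $X_1,\dots,X_n\in\Omega$ according to $\mu$, and then, conditionally on the types, including each edge $\{i,j\}$ independently with probability $W(X_i,X_j)$. $\deg_W(x)=\int_\Omega W(x,y)\,d\mu(y)$ and $\mathsf{D}_W(\alpha)=\{x\in\Omega:\deg_W(x)\le\alpha\}$. $W$ is connected if for every measurable partition $\Omega=S\sqcup T$ with $\mu(S),\mu(T)>0$ we have $\int_{S\times T}W\,d\mu^2>0$. $W$ has a narrow peninsula if there exist $a\in(0,\tfrac12]$ and disjoint measurable sets $A,B\subseteq\Omega$ with $\mu(A)>a$, $\mu(B)=1-2a$, such that $W=0$ almost everywhere on $A\times(A\cup B)$. *)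

theory Defs
  imports "HOL-Probability.Probability"
begin

definition unit_lebesgue :: "real measure" where
  "unit_lebesgue = restrict_space lborel {0..1}"

definition atomless_standard_prob_space :: "'a measure \<Rightarrow> bool" where
  "atomless_standard_prob_space M \<longleftrightarrow> prob_space M \<and>
     (\<exists>f g. f \<in> measurable M unit_lebesgue \<and> g \<in> measurable unit_lebesgue M \<and>
        distr M unit_lebesgue f = unit_lebesgue \<and> distr unit_lebesgue M g = M \<and>
        (AE x in M. g (f x) = x) \<and> (AE y in unit_lebesgue. f (g y) = y))"

definition graphon :: "'a measure \<Rightarrow> ('a \<Rightarrow> 'a \<Rightarrow> real) \<Rightarrow> bool" where
  "graphon M W \<longleftrightarrow> (\<lambda>p. W (fst p) (snd p)) \<in> borel_measurable (M \<Otimes>\<^sub>M M) \<and>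
     (\<forall>x\<in>space M. \<forall>y\<in>space M. W x y = W y x \<and> 0 \<le> W x y \<and> W x y \<le> 1)"

definition deg :: "'a measure \<Rightarrow> ('a \<Rightarrow> 'a \<Rightarrow> real) \<Rightarrow> 'a \<Rightarrow> real" where
  "deg M W x = (\<integral>y. W x y \<partial>M)"

definition low_deg_set :: "'a measure \<Rightarrow> ('a \<Rightarrow> 'a \<Rightarrow> real) \<Rightarrow> real \<Rightarrow> 'a set" where
  "low_deg_set M W \<alpha> = {x \<in> space M. deg M W x \<le> \<alpha>}"

definition connected_graphon :: "'a measure \<Rightarrow> ('a \<Rightarrow> 'a \<Rightarrow> real) \<Rightarrow> bool" where
  "connected_graphon M W \<longleftrightarrow>
     (\<forall>S T. S \<in> sets M \<and> T \<in> sets M \<and> S \<inter> T = {} \<and> S \<union> T = space M \<and>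
        measure M S > 0 \<and> measure M T > 0 \<longrightarrow>
        (\<integral>p \<in> S \<times> T. W (fst p) (snd p) \<partial>(M \<Otimes>\<^sub>M M)) > 0)"

definition narrow_peninsula :: "'a measure \<Rightarrow> ('a \<Rightarrow> 'a \<Rightarrow> real) \<Rightarrow> bool" where
  "narrow_peninsula M W \<longleftrightarrow>
     (\<exists>a A B. 0 < a \<and> a \<le> 1/2 \<and> A \<in> sets M \<and> B \<in> sets M \<and> A \<inter> B = {} \<and>
        measure M A > a \<and> measure M B = 1 - 2 * a \<and>
        (AE p in M \<Otimes>\<^sub>M M. p \<in> A \<times> (A \<union> B) \<longrightarrow> W (fst p) (snd p) = 0))"

text \<open>Graphs on vertex set {0..<n}: edge sets are sets of pairs (i,j) with i<j<n.\<close>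
definition all_pairs :: "nat \<Rightarrow> (nat \<times> nat) set" where
  "all_pairs n = {(i, j). i < j \<and> j < n}"

definition hamiltonian :: "nat \<Rightarrow> (nat \<times> nat) set \<Rightarrow> bool" where
  "hamiltonian n E \<longleftrightarrow> 3 \<le> n \<and>
     (\<exists>p. bij_betw p {..<n} {..<n} \<and>
        (\<forall>k<n. (min (p k) (p (Suc k mod n)), max (p k) (p (Suc k mod n))) \<in> E))"

text \<open>Probability that G(n,W) equals the graph with edge set E, given types x.\<close>
definition graph_prob ::
    "('a \<Rightarrow> 'a \<Rightarrow> real) \<Rightarrow> nat \<Rightarrow> (nat \<Rightarrow> 'a) \<Rightarrow> (nat \<times> nat) set \<Rightarrow> real" where
  "graph_prob W n x E = (\<Prod>e\<in>all_pairs n.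
      if e \<in> E then W (x (fst e)) (x (snd e)) else 1 - W (x (fst e)) (x (snd e)))"

text \<open>Pr[G(n,W) is Hamiltonian]: types i.i.d. from M, then edges independently.\<close>
definition ham_prob :: "'a measure \<Rightarrow> ('a \<Rightarrow> 'a \<Rightarrow> real) \<Rightarrow> nat \<Rightarrow> real" where
  "ham_prob M W n = (\<integral>x. (\<Sum>E \<in> {E. E \<subseteq> all_pairs n \<and> hamiltonian n E}. graph_prob W n x E)
      \<partial>(PiM {..<n} (\<lambda>_. M)))"

end

theory Submission
  imports Defs
begin

locale G =
  fixes M :: "'a measure" and W :: "'a \<Rightarrow> 'a \<Rightarrow> real"
  assumes PS: "prob_space M" and GR: "graphon M W"
begin

abbreviation PP :: "nat \<Rightarrow> (nat \<Rightarrow> 'a) measure" where "PP n \<equiv> PiM {..<n} (\<lambda>_. M)"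

lemma Wmeas[measurable]: "(\<lambda>p. W (fst p) (snd p)) \<in> borel_measurable (M \<Otimes>\<^sub>M M)"
  using GR by (simp add: graphon_def)

lemma Wsym: "x \<in> space M \<Longrightarrow> y \<in> space M \<Longrightarrow> W x y = W y x"
  using GR by (simp add: graphon_def)
lemma Wnn: "x \<in> space M \<Longrightarrow> y \<in> space M \<Longrightarrow> 0 \<le> W x y"
  using GR by (simp add: graphon_def)
lemma Wle1: "x \<in> space M \<Longrightarrow> y \<in> space M \<Longrightarrow> W x y \<le> 1"
  using GR by (simp add: graphon_def)

lemma probP: "prob_space (PP n)"
  by (intro prob_space_PiM) (simp add: PS)

lemma comp1: "i < n \<Longrightarrow> distr (PP n) M (\<lambda>x. x i) = M"
  using distr_PiM_component[of "{..<n}" "\<lambda>_. M" i] PS by simp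

lemma meas2[measurable]: "i < n \<Longrightarrow> j < n \<Longrightarrow> (\<lambda>x. (x i, x j)) \<in> measurable (PP n) (M \<Otimes>\<^sub>M M)"
  by measurable

lemma comp2:
  assumes "i < n" "j < n" "i \<noteq> j"
  shows "distr (PP n) (M \<Otimes>\<^sub>M M) (\<lambda>x. (x i, x j)) = M \<Otimes>\<^sub>M M"
proof (rule pair_measure_eqI[symmetric])
  interpret prob_space M by (rule PS)
  show "sigma_finite_measure M" by unfold_locales
  show "sigma_finite_measure M" by unfold_locales
  show "sets (M \<Otimes>\<^sub>M M) = sets (distr (PP n) (M \<Otimes>\<^sub>M M) (\<lambda>x. (x i, x j)))" by simp
  fix A B assume A: "A \<in> sets M" and B: "B \<in> sets M"
  have AB: "A \<times> B \<in> sets (M \<Otimes>\<^sub>M M)" using A B by simp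
  have eq: "(\<lambda>x. (x i, x j)) -` (A \<times> B) \<inter> space (PP n) =
     prod_emb {..<n} (\<lambda>_. M) {i, j} (Pi\<^sub>E {i,j} (\<lambda>k. if k = i then A else B))"
    using assms by (auto simp: prod_emb_def space_PiM PiE_iff)
  have "emeasure (distr (PP n) (M \<Otimes>\<^sub>M M) (\<lambda>x. (x i, x j))) (A \<times> B)
     = emeasure (PP n) (prod_emb {..<n} (\<lambda>_. M) {i, j} (Pi\<^sub>E {i,j} (\<lambda>k. if k = i then A else B)))"
    using assms AB by (simp add: emeasure_distr eq)
  also have "\<dots> = (\<Prod>k\<in>{i,j}. emeasure M (if k = i then A else B))"
    using assms A B by (intro emeasure_PiM_emb) (auto simp: PS)
  also have "\<dots> = emeasure M A * emeasure M B" using assms by simp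
  finally show "emeasure M A * emeasure M B = emeasure (distr (PP n) (M \<Otimes>\<^sub>M M) (\<lambda>x. (x i, x j))) (A \<times> B)" by simp
qed

lemma int2:
  assumes "i < n" "j < n" "i \<noteq> j" "g \<in> borel_measurable (M \<Otimes>\<^sub>M M)"
  shows "(\<integral>x. g (x i, x j) \<partial>PP n) = (integral\<^sup>L (M \<Otimes>\<^sub>M M) g :: real)"
proof -
  have "integral\<^sup>L (M \<Otimes>\<^sub>M M) g = integral\<^sup>L (distr (PP n) (M \<Otimes>\<^sub>M M) (\<lambda>x. (x i, x j))) g"
    using comp2[OF assms(1-3)] by simp
  also have "\<dots> = (\<integral>x. g (x i, x j) \<partial>PP n)"
    using assms by (intro integral_distr) auto
  finally show ?thesis by simp
qed

lemma int1:
  assumes "i < n" "g \<in> borel_measurable M"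
  shows "(\<integral>x. g (x i) \<partial>PP n) = (integral\<^sup>L M g :: real)"
proof -
  have "integral\<^sup>L M g = integral\<^sup>L (distr (PP n) M (\<lambda>x. x i)) g"
    using comp1[OF assms(1)] by simp
  also have "\<dots> = (\<integral>x. g (x i) \<partial>PP n)"
    using assms by (intro integral_distr) auto
  finally show ?thesis by simp
qed

lemma AE2:
  assumes "i < n" "j < n" "i \<noteq> j" "AE p in M \<Otimes>\<^sub>M M. Q p"
  shows "AE x in PP n. Q (x i, x j)"
proof -
  have "AE p in distr (PP n) (M \<Otimes>\<^sub>M M) (\<lambda>x. (x i, x j)). Q p"
    by (subst comp2[OF assms(1-3)]) (rule assms(4))
  from AE_distrD[OF meas2[OF assms(1,2)] this] show ?thesis .
qed

end

definition gpw :: "('e \<Rightarrow> real) \<Rightarrow> 'e set \<Rightarrow> 'e set \<Rightarrow> real" where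
  "gpw w P E = (\<Prod>e\<in>P. if e \<in> E then w e else 1 - w e)"

lemma gpw_split: "finite P \<Longrightarrow> E \<subseteq> P \<Longrightarrow> gpw w P E = prod w E * prod (\<lambda>e. 1 - w e) (P - E)"
  unfolding gpw_def
  by (subst prod.If_cases) (auto intro!: arg_cong2[where f="(*)"] prod.cong simp: Int_absorb1 Diff_eq)

lemma gpw_avoid:
  assumes P: "finite P" and Q: "Q \<subseteq> P"
  shows "(\<Sum>E\<in>Pow P. if E \<inter> Q = {} then gpw w P E else 0) = (\<Prod>e\<in>Q. 1 - w e)"
proof -
  let ?f1 = "\<lambda>e. if e \<in> Q then 0 else w e" and ?f2 = "\<lambda>e. 1 - w e"
  have "(\<Prod>e\<in>P. ?f1 e + ?f2 e) = (\<Sum>X\<in>Pow P. prod ?f1 X * prod ?f2 (P - X))"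
    using P by (rule prod_add)
  also have "\<dots> = (\<Sum>E\<in>Pow P. if E \<inter> Q = {} then gpw w P E else 0)"
  proof (rule sum.cong[OF refl])
    fix X assume X: "X \<in> Pow P"
    show "prod ?f1 X * prod ?f2 (P - X) = (if X \<inter> Q = {} then gpw w P X else 0)"
    proof (cases "X \<inter> Q = {}")
      case True
      then have "prod ?f1 X = prod w X" by (intro prod.cong) auto
      then show ?thesis using True X P by (simp add: gpw_split)
    next
      case False
      then obtain e where "e \<in> X" "e \<in> Q" by auto
      then have "prod ?f1 X = 0" using X P by (intro prod_zero) (auto intro: finite_subset)
      then show ?thesis using False by simp
    qed
  qed
  finally have "(\<Sum>E\<in>Pow P. if E \<inter> Q = {} then gpw w P E else 0) = (\<Prod>e\<in>P. ?f1 e + ?f2 e)" by simp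
  also have "\<dots> = (\<Prod>e\<in>P. if e \<in> Q then 1 - w e else 1)" by (intro prod.cong) auto
  also have "\<dots> = (\<Prod>e\<in>Q. 1 - w e)"
    using P Q by (subst prod.If_cases) (auto simp: Int_absorb1 Int_absorb2)
  finally show ?thesis .
qed

lemma gpw_total: "finite P \<Longrightarrow> (\<Sum>E\<in>Pow P. gpw w P E) = 1"
  using gpw_avoid[of P "{}" w] by simp

lemma gpw_nonneg: "(\<And>e. e \<in> P \<Longrightarrow> 0 \<le> w e \<and> w e \<le> 1) \<Longrightarrow> 0 \<le> gpw w P E"
  unfolding gpw_def by (intro prod_nonneg) auto

lemma gpw_le1: "(\<And>e. e \<in> P \<Longrightarrow> 0 \<le> w e \<and> w e \<le> 1) \<Longrightarrow> gpw w P E \<le> 1"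
  unfolding gpw_def by (intro prod_le_1) auto

lemma prod_one_minus_ge:
  fixes w :: "'e \<Rightarrow> real"
  assumes "finite Q" "\<And>e. e \<in> Q \<Longrightarrow> 0 \<le> w e \<and> w e \<le> 1"
  shows "1 - (\<Sum>e\<in>Q. w e) \<le> (\<Prod>e\<in>Q. 1 - w e)"
  using assms
proof (induction Q rule: finite_induct)
  case empty then show ?case by simp
next
  case (insert a F)
  have IH: "1 - sum w F \<le> prod (\<lambda>e. 1 - w e) F" using insert by auto
  have a: "0 \<le> w a" "w a \<le> 1" using insert by auto
  have p: "0 \<le> prod (\<lambda>e. 1 - w e) F" "prod (\<lambda>e. 1 - w e) F \<le> 1"
    using insert by (auto intro!: prod_nonneg prod_le_1)
  have "1 - sum w (insert a F) = (1 - sum w F) - w a" using insert by simp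
  also have "\<dots> \<le> (1 - w a) * prod (\<lambda>e. 1 - w e) F"
  proof -
    have "(1 - w a) * prod (\<lambda>e. 1 - w e) F = prod (\<lambda>e. 1 - w e) F - w a * prod (\<lambda>e. 1 - w e) F"
      by (simp add: algebra_simps)
    moreover have "w a * prod (\<lambda>e. 1 - w e) F \<le> w a" using a p by (simp add: mult_left_le)
    ultimately show ?thesis using IH by linarith
  qed
  also have "\<dots> = prod (\<lambda>e. 1 - w e) (insert a F)" using insert by simp
  finally show ?case .
qed

lemma finite_all_pairs: "finite (all_pairs n)"
proof -
  have "all_pairs n \<subseteq> {..<n} \<times> {..<n}" by (auto simp: all_pairs_def)
  then show ?thesis by (rule finite_subset) auto
qed

lemma graph_prob_gpw: "graph_prob W n x E = gpw (\<lambda>e. W (x (fst e)) (x (snd e))) (all_pairs n) E"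
  by (simp add: graph_prob_def gpw_def)

lemma ham_edges:
  assumes H: "hamiltonian n E" and sub: "E \<subseteq> all_pairs n" and nz: "graph_prob W n x E \<noteq> 0"
    and sym: "\<And>i j. i < n \<Longrightarrow> j < n \<Longrightarrow> W (x i) (x j) = W (x j) (x i)"
  shows "\<exists>p. bij_betw p {..<n} {..<n} \<and> 3 \<le> n \<and> (\<forall>k<n. W (x (p k)) (x (p (Suc k mod n))) \<noteq> 0)"
proof -
  obtain p where p: "bij_betw p {..<n} {..<n}" and n: "3 \<le> n"
    and ed: "\<And>k. k < n \<Longrightarrow> (min (p k) (p (Suc k mod n)), max (p k) (p (Suc k mod n))) \<in> E"
    using H unfolding hamiltonian_def by blast
  have wnz: "W (x (fst e)) (x (snd e)) \<noteq> 0" if "e \<in> E" for e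
  proof
    assume "W (x (fst e)) (x (snd e)) = 0"
    then have "graph_prob W n x E = 0" unfolding graph_prob_def
      using that sub finite_all_pairs by (intro prod_zero) auto
    with nz show False by simp
  qed
  have "W (x (p k)) (x (p (Suc k mod n))) \<noteq> 0" if k: "k < n" for k
  proof -
    have "Suc k mod n < n" using n by simp
    then have a: "p k < n" "p (Suc k mod n) < n" using bij_betwE[OF p] k by auto
    show ?thesis
    proof (cases "p k \<le> p (Suc k mod n)")
      case True
      then show ?thesis using wnz[OF ed[OF k]] by (simp add: min_def max_def)
    next
      case False
      then have "W (x (p (Suc k mod n))) (x (p k)) \<noteq> 0" using wnz[OF ed[OF k]] by (simp add: min_def max_def)
      then show ?thesis using sym[OF a] by simp
    qed
  qed
  then show ?thesis using p n by blast
qed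

lemma count_inj:
  assumes p: "bij_betw p {..<n} {..<n}"
    and step: "\<And>k. k < n \<Longrightarrow> x (p k) \<in> U \<Longrightarrow> x (p (Suc k mod n)) \<in> V"
  shows "card {i. i < n \<and> x i \<in> U} \<le> card {i. i < n \<and> x i \<in> V}"
proof -
  have surj: "p ` {..<n} = {..<n}" using p by (simp add: bij_betw_def)
  have im: "{i. i < n \<and> x i \<in> Z} = p ` {k. k < n \<and> x (p k) \<in> Z}" for Z
  proof
    show "{i. i < n \<and> x i \<in> Z} \<subseteq> p ` {k. k < n \<and> x (p k) \<in> Z}"
    proof
      fix i assume "i \<in> {i. i < n \<and> x i \<in> Z}"
      then have i: "i < n" "x i \<in> Z" by auto
      then have "i \<in> p ` {..<n}" using surj by simp
      then obtain k where "k < n" "i = p k" by auto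
      then show "i \<in> p ` {k. k < n \<and> x (p k) \<in> Z}" using i by auto
    qed
    show "p ` {k. k < n \<and> x (p k) \<in> Z} \<subseteq> {i. i < n \<and> x i \<in> Z}"
      using surj by auto
  qed
  have cd: "card {i. i < n \<and> x i \<in> Z} = card {k. k < n \<and> x (p k) \<in> Z}" for Z
    unfolding im using p by (intro card_image) (auto simp: bij_betw_def intro: inj_on_subset)
  have inj: "inj_on (\<lambda>k. Suc k mod n) {k. k < n \<and> x (p k) \<in> U}"
  proof (rule inj_onI)
    fix a b assume "a \<in> {k. k < n \<and> x (p k) \<in> U}" "b \<in> {k. k < n \<and> x (p k) \<in> U}" "Suc a mod n = Suc b mod n"
    then show "a = b"
      by (auto simp: mod_Suc split: if_splits)
  qed
  have "card {k. k < n \<and> x (p k) \<in> U} \<le> card {k. k < n \<and> x (p k) \<in> V}"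
    by (rule card_inj_on_le[OF inj]) (auto intro: step)
  then show ?thesis using cd by simp
qed

lemma closure_all:
  assumes p: "bij_betw p {..<n} {..<n}"
    and step: "\<And>k. k < n \<Longrightarrow> x (p k) \<in> S \<Longrightarrow> x (p (Suc k mod n)) \<in> S"
    and i: "i < n" "x i \<in> S"
  shows "\<forall>i<n. x i \<in> S"
proof -
  obtain k0 where k0: "k0 < n" "p k0 = i" proof -
    have "i \<in> p ` {..<n}" using p i by (simp add: bij_betw_def)
    then show ?thesis using that by auto
  qed
  have n: "0 < n" using i by simp
  have all: "x (p ((k0 + j) mod n)) \<in> S" for j
  proof (induction j)
    case 0 then show ?case using k0 i by simp
  next
    case (Suc j)
    have "x (p (Suc ((k0 + j) mod n) mod n)) \<in> S" using step[OF _ Suc] n by simp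
    moreover have "Suc ((k0 + j) mod n) mod n = (k0 + Suc j) mod n" by (simp add: mod_Suc_eq)
    ultimately show ?case by simp
  qed
  show ?thesis
  proof (intro allI impI)
    fix i' assume "i' < n"
    then have "i' \<in> p ` {..<n}" using p by (simp add: bij_betw_def)
    then obtain k' where k': "k' < n" "p k' = i'" by auto
    have "(k0 + (k' + n - k0)) mod n = k'" using k0 k' by simp
    then show "x i' \<in> S" using all[of "k' + n - k0"] k' by simp
  qed
qed

lemma ham_touch:
  assumes H: "hamiltonian n E" and i: "i < n"
  shows "\<exists>e\<in>E. fst e = i \<or> snd e = i"
proof -
  obtain p where p: "bij_betw p {..<n} {..<n}"
    and ed: "\<And>k. k < n \<Longrightarrow> (min (p k) (p (Suc k mod n)), max (p k) (p (Suc k mod n))) \<in> E"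
    using H unfolding hamiltonian_def by blast
  obtain k where k: "k < n" "p k = i" proof -
    have "i \<in> p ` {..<n}" using p i by (simp add: bij_betw_def)
    then show ?thesis using that by auto
  qed
  show ?thesis using ed[OF k(1)] k by (intro bexI[of _ "(min (p k) (p (Suc k mod n)), max (p k) (p (Suc k mod n)))"]) (auto simp: min_def max_def)
qed

context G begin

lemma space_PP: "x \<in> space (PP n) \<Longrightarrow> i < n \<Longrightarrow> x i \<in> space M"
  by (auto simp: space_PiM PiE_iff)

lemma measW2[measurable]: "i < n \<Longrightarrow> j < n \<Longrightarrow> (\<lambda>x. W (x i) (x j)) \<in> borel_measurable (PP n)"
  using measurable_compose[OF meas2 Wmeas] by simp

lemma wt01: "x \<in> space (PP n) \<Longrightarrow> e \<in> all_pairs n \<Longrightarrow> 0 \<le> W (x (fst e)) (x (snd e)) \<and> W (x (fst e)) (x (snd e)) \<le> 1"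
  by (auto simp: all_pairs_def intro!: Wnn Wle1 space_PP)

lemma meas_gp[measurable]: "(\<lambda>x. graph_prob W n x E) \<in> borel_measurable (PP n)"
  unfolding graph_prob_def
proof (rule borel_measurable_prod)
  fix e assume "e \<in> all_pairs n"
  then have "fst e < n" "snd e < n" by (auto simp: all_pairs_def)
  then show "(\<lambda>x. if e \<in> E then W (x (fst e)) (x (snd e)) else 1 - W (x (fst e)) (x (snd e))) \<in> borel_measurable (PP n)"
    by measurable
qed

definition hfun :: "nat \<Rightarrow> (nat \<Rightarrow> 'a) \<Rightarrow> real" where
  "hfun n x = (\<Sum>E \<in> {E. E \<subseteq> all_pairs n \<and> hamiltonian n E}. graph_prob W n x E)"

lemma meas_h[measurable]: "hfun n \<in> borel_measurable (PP n)"
  unfolding hfun_def by measurable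

lemma gp_nonneg: "x \<in> space (PP n) \<Longrightarrow> 0 \<le> graph_prob W n x E"
  unfolding graph_prob_gpw using wt01 by (intro gpw_nonneg) auto

lemma gp_total: "(\<Sum>E\<in>Pow (all_pairs n). graph_prob W n x E) = 1"
  unfolding graph_prob_gpw using finite_all_pairs by (rule gpw_total)

lemma h_bounds: assumes "x \<in> space (PP n)" shows "0 \<le> hfun n x" "hfun n x \<le> 1"
proof -
  have fin: "finite (Pow (all_pairs n))" using finite_all_pairs by simp
  have sub: "{E. E \<subseteq> all_pairs n \<and> hamiltonian n E} \<subseteq> Pow (all_pairs n)" by auto
  show "0 \<le> hfun n x" unfolding hfun_def using gp_nonneg[OF assms] by (intro sum_nonneg) auto
  have "hfun n x \<le> (\<Sum>E\<in>Pow (all_pairs n). graph_prob W n x E)"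
    unfolding hfun_def using gp_nonneg[OF assms] by (intro sum_mono2[OF fin sub]) auto
  then show "hfun n x \<le> 1" using gp_total by simp
qed

lemma integrable_bdd:
  fixes f :: "(nat \<Rightarrow> 'a) \<Rightarrow> real"
  assumes "f \<in> borel_measurable (PP n)" "\<And>x. x \<in> space (PP n) \<Longrightarrow> \<bar>f x\<bar> \<le> B"
  shows "integrable (PP n) f"
proof -
  interpret prob_space "PP n" by (rule probP)
  show ?thesis using assms by (intro integrable_const_bound[where B=B]) auto
qed

lemma integrable_h: "integrable (PP n) (hfun n)"
  using h_bounds by (intro integrable_bdd[where B=1]) auto

lemma ham_prob_h: "ham_prob M W n = integral\<^sup>L (PP n) (hfun n)"
  unfolding ham_prob_def hfun_def by simp

lemma ham_prob_nonneg: "0 \<le> ham_prob M W n"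
  unfolding ham_prob_h using h_bounds by (intro integral_nonneg_AE) auto

lemma reduce:
  assumes C: "C \<in> sets (PP n)"
    and ae: "AE x in PP n. \<forall>E. E \<subseteq> all_pairs n \<longrightarrow> hamiltonian n E \<longrightarrow> graph_prob W n x E \<noteq> 0 \<longrightarrow> x \<in> C"
  shows "ham_prob M W n \<le> measure (PP n) C"
proof -
  have "AE x in PP n. hfun n x \<le> indicator C x"
    using ae AE_space
  proof eventually_elim
    case (elim x)
    show ?case
    proof (cases "x \<in> C")
      case True then show ?thesis using h_bounds[of x n] elim by simp
    next
      case False
      then have "hfun n x = 0" unfolding hfun_def using elim by (intro sum.neutral) auto
      then show ?thesis by simp
    qed
  qed
  then have "integral\<^sup>L (PP n) (hfun n) \<le> integral\<^sup>L (PP n) (indicator C)"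
    using C by (intro integral_mono_AE integrable_h) (auto intro!: integrable_bdd[where B=1])
  then show ?thesis using C unfolding ham_prob_h by simp
qed

lemma AEpairs:
  assumes "AE p in M \<Otimes>\<^sub>M M. R p"
  shows "AE x in PP n. \<forall>i<n. \<forall>j<n. i \<noteq> j \<longrightarrow> R (x i, x j)"
proof -
  have "AE x in PP n. \<forall>s\<in>{..<n}\<times>{..<n}. fst s \<noteq> snd s \<longrightarrow> R (x (fst s), x (snd s))"
  proof (rule AE_finite_allI)
    fix s assume "s \<in> {..<n}\<times>{..<n}"
    then show "AE x in PP n. fst s \<noteq> snd s \<longrightarrow> R (x (fst s), x (snd s))"
      using AE2[of "fst s" n "snd s" R] assms by (cases "fst s = snd s") auto
  qed simp
  then show ?thesis by (auto elim!: eventually_mono)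
qed

end

context G begin

lemma box: "(\<And>i. i < n \<Longrightarrow> A i \<in> sets M) \<Longrightarrow> measure (PP n) (Pi\<^sub>E {..<n} A) = (\<Prod>i<n. measure M (A i))"
proof -
  assume A: "\<And>i. i < n \<Longrightarrow> A i \<in> sets M"
  interpret prob_space M by (rule PS)
  interpret finite_product_prob_space "\<lambda>_. M" "{..<n}"
    by unfold_locales simp
  show ?thesis using A by (intro finite_measure_PiM_emb) auto
qed

lemma box_sets: "(\<And>i. i < n \<Longrightarrow> A i \<in> sets M) \<Longrightarrow> Pi\<^sub>E {..<n} A \<in> sets (PP n)"
  by (intro sets_PiM_I_finite) auto

lemma in_box: "x \<in> space (PP n) \<Longrightarrow> (\<forall>i<n. x i \<in> A i) \<Longrightarrow> x \<in> Pi\<^sub>E {..<n} A"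
  by (auto simp: space_PiM PiE_iff)

lemma succ_ne: "3 \<le> n \<Longrightarrow> k < n \<Longrightarrow> Suc k mod n \<noteq> k"
  by (auto simp: mod_Suc)

lemma case_i:
  assumes S: "S \<in> sets M" and T: "T \<in> sets M" and disj: "S \<inter> T = {}" and cov: "S \<union> T = space M"
    and ae: "AE p in M \<Otimes>\<^sub>M M. p \<in> S \<times> T \<longrightarrow> W (fst p) (snd p) = 0"
  shows "ham_prob M W n \<le> measure M S ^ n + measure M T ^ n"
proof -
  let ?C = "Pi\<^sub>E {..<n} (\<lambda>_. S) \<union> Pi\<^sub>E {..<n} (\<lambda>_. T)"
  have C: "?C \<in> sets (PP n)" using S T by (intro sets.Un box_sets) auto
  have "AE x in PP n. \<forall>E. E \<subseteq> all_pairs n \<longrightarrow> hamiltonian n E \<longrightarrow> graph_prob W n x E \<noteq> 0 \<longrightarrow> x \<in> ?C"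
    using AEpairs[OF ae, of n] AE_space
  proof eventually_elim
    case (elim x)
    show ?case
    proof (intro allI impI)
      fix E assume E: "E \<subseteq> all_pairs n" "hamiltonian n E" "graph_prob W n x E \<noteq> 0"
      have sym: "\<And>i j. i < n \<Longrightarrow> j < n \<Longrightarrow> W (x i) (x j) = W (x j) (x i)"
        using elim(2) by (intro Wsym space_PP) auto
      obtain p where p: "bij_betw p {..<n} {..<n}" and n: "3 \<le> n"
        and nz: "\<And>k. k < n \<Longrightarrow> W (x (p k)) (x (p (Suc k mod n))) \<noteq> 0"
        using ham_edges[OF E(2) E(1) E(3) sym] by blast
      have step: "x (p (Suc k mod n)) \<in> S" if k: "k < n" and xs: "x (p k) \<in> S" for k
      proof (rule ccontr)
        assume nS: "x (p (Suc k mod n)) \<notin> S"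
        have k1: "Suc k mod n < n" using n by simp
        have pk: "p k < n" "p (Suc k mod n) < n" using bij_betwE[OF p] k k1 by auto
        have "p k \<noteq> p (Suc k mod n)"
          using p k k1 succ_ne[OF n k] by (auto simp: bij_betw_def inj_on_def)
        moreover have "x (p (Suc k mod n)) \<in> T" using nS cov space_PP[OF elim(2) pk(2)] by auto
        ultimately have "W (x (p k)) (x (p (Suc k mod n))) = 0"
          using elim(1) pk xs by auto
        with nz[OF k] show False by simp
      qed
      show "x \<in> ?C"
      proof (cases "\<exists>i<n. x i \<in> S")
        case True
        then obtain i where "i < n" "x i \<in> S" by blast
        from closure_all[OF p step this] have "\<forall>i<n. x i \<in> S" by blast
        then have "x \<in> Pi\<^sub>E {..<n} (\<lambda>_. S)" using in_box[OF elim(2), of "\<lambda>_. S"] by simp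
        then show ?thesis by simp
      next
        case False
        then have "\<forall>i<n. x i \<in> T" using cov space_PP[OF elim(2)] by auto
        then have "x \<in> Pi\<^sub>E {..<n} (\<lambda>_. T)" using in_box[OF elim(2), of "\<lambda>_. T"] by simp
        then show ?thesis by simp
      qed
    qed
  qed
  then have "ham_prob M W n \<le> measure (PP n) ?C" by (rule reduce[OF C])
  also have "\<dots> \<le> measure (PP n) (Pi\<^sub>E {..<n} (\<lambda>_. S)) + measure (PP n) (Pi\<^sub>E {..<n} (\<lambda>_. T))"
  proof -
    interpret prob_space "PP n" by (rule probP)
    show ?thesis using S T by (intro measure_Un_le box_sets) auto
  qed
  also have "\<dots> = measure M S ^ n + measure M T ^ n" using S T by (simp add: box)
  finally show ?thesis .
qed

end

context G begin

lemma integrable_M: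
  fixes f :: "'a \<Rightarrow> real"
  assumes "f \<in> borel_measurable M" "\<And>x. x \<in> space M \<Longrightarrow> \<bar>f x\<bar> \<le> B"
  shows "integrable M f"
proof -
  interpret prob_space M by (rule PS)
  show ?thesis using assms by (intro integrable_const_bound[where B=B]) auto
qed

lemma integrable_MM:
  fixes f :: "'a \<times> 'a \<Rightarrow> real"
  assumes "f \<in> borel_measurable (M \<Otimes>\<^sub>M M)" "\<And>x. x \<in> space (M \<Otimes>\<^sub>M M) \<Longrightarrow> \<bar>f x\<bar> \<le> B"
  shows "integrable (M \<Otimes>\<^sub>M M) f"
proof -
  interpret prob_space M by (rule PS)
  interpret P2: pair_prob_space M M by unfold_locales
  show ?thesis using assms by (intro P2.integrable_const_bound[where B=B]) auto
qed

lemma prodint: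
  fixes f g :: "'a \<Rightarrow> real"
  assumes ij: "i < n" "j < n" "i \<noteq> j"
    and f[measurable]: "f \<in> borel_measurable M" and g[measurable]: "g \<in> borel_measurable M"
    and fb: "\<And>x. x \<in> space M \<Longrightarrow> \<bar>f x\<bar> \<le> 1" and gb: "\<And>x. x \<in> space M \<Longrightarrow> \<bar>g x\<bar> \<le> 1"
  shows "(\<integral>x. f (x i) * g (x j) \<partial>PP n) = integral\<^sup>L M f * integral\<^sup>L M g"
proof -
  interpret prob_space M by (rule PS)
  interpret P2: pair_prob_space M M by unfold_locales
  have "(\<integral>x. f (x i) * g (x j) \<partial>PP n) = (\<integral>p. f (fst p) * g (snd p) \<partial>(M \<Otimes>\<^sub>M M))"
    using int2[OF ij, of "\<lambda>p. f (fst p) * g (snd p)"] by simp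
  also have "\<dots> = (\<integral>a. (\<integral>b. f a * g b \<partial>M) \<partial>M)"
  proof -
    have "integrable (M \<Otimes>\<^sub>M M) (\<lambda>(a, b). f a * g b)"
      using fb gb by (intro integrable_MM[where B=1]) (auto simp: space_pair_measure abs_mult intro!: mult_le_one)
    from P2.integral_fst[OF this] show ?thesis by (simp add: case_prod_beta')
  qed
  also have "\<dots> = (\<integral>a. f a * integral\<^sup>L M g \<partial>M)" by simp
  also have "\<dots> = integral\<^sup>L M f * integral\<^sup>L M g" by simp
  finally show ?thesis .
qed

lemma lin_int:
  fixes f :: "'a \<Rightarrow> real"
  assumes f[measurable]: "f \<in> borel_measurable M" and fb: "\<And>x. x \<in> space M \<Longrightarrow> \<bar>f x\<bar> \<le> 1"
  shows "(\<integral>x. (\<Sum>i<n. f (x i)) \<partial>PP n) = n * integral\<^sup>L M f"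
proof -
  have ii: "integrable (PP n) (\<lambda>x. f (x i))" if "i \<in> {..<n}" for i
    using fb space_PP that by (intro integrable_bdd[where B=1]) auto
  have "(\<integral>x. (\<Sum>i<n. f (x i)) \<partial>PP n) = (\<Sum>i<n. (\<integral>x. f (x i) \<partial>PP n))"
    by (rule Bochner_Integration.integral_sum[OF ii])
  also have "\<dots> = (\<Sum>i<n. integral\<^sup>L M f)" by (intro sum.cong refl int1) auto
  finally show ?thesis by simp
qed

lemma sq_int:
  fixes f :: "'a \<Rightarrow> real"
  assumes f[measurable]: "f \<in> borel_measurable M" and fb: "\<And>x. x \<in> space M \<Longrightarrow> \<bar>f x\<bar> \<le> 1"
  shows "(\<integral>x. (\<Sum>i<n. f (x i))\<^sup>2 \<partial>PP n) \<le> n * (\<integral>y. (f y)\<^sup>2 \<partial>M) + (n * integral\<^sup>L M f)\<^sup>2"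
proof -
  have bd: "\<bar>f (x i) * f (x j)\<bar> \<le> 1" if "x \<in> space (PP n)" "i < n" "j < n" for x i j
    using fb[OF space_PP[OF that(1,2)]] fb[OF space_PP[OF that(1,3)]] by (simp add: abs_mult mult_le_one)
  have "(\<integral>x. (\<Sum>i<n. f (x i))\<^sup>2 \<partial>PP n) = (\<integral>x. (\<Sum>i<n. \<Sum>j<n. f (x i) * f (x j)) \<partial>PP n)"
    by (simp add: power2_eq_square sum_product)
  also have "\<dots> = (\<Sum>i<n. \<Sum>j<n. (\<integral>x. f (x i) * f (x j) \<partial>PP n))"
  proof -
    have ii: "integrable (PP n) (\<lambda>x. f (x i) * f (x j))" if "i \<in> {..<n}" "j \<in> {..<n}" for i j
      using bd that by (intro integrable_bdd[where B=1]) auto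
    have "(\<integral>x. (\<Sum>i<n. \<Sum>j<n. f (x i) * f (x j)) \<partial>PP n) = (\<Sum>i<n. (\<integral>x. (\<Sum>j<n. f (x i) * f (x j)) \<partial>PP n))"
      using ii by (intro Bochner_Integration.integral_sum integrable_sum) auto
    also have "\<dots> = (\<Sum>i<n. \<Sum>j<n. (\<integral>x. f (x i) * f (x j) \<partial>PP n))"
      using ii by (intro sum.cong refl Bochner_Integration.integral_sum) auto
    finally show ?thesis .
  qed
  also have "\<dots> \<le> (\<Sum>i<n. \<Sum>j<n. (if i = j then (\<integral>y. (f y)\<^sup>2 \<partial>M) else 0) + (integral\<^sup>L M f)\<^sup>2)"
  proof (intro sum_mono)
    fix i j assume i: "i \<in> {..<n}" and j: "j \<in> {..<n}"
    show "(\<integral>x. f (x i) * f (x j) \<partial>PP n) \<le> (if i = j then (\<integral>y. (f y)\<^sup>2 \<partial>M) else 0) + (integral\<^sup>L M f)\<^sup>2"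
    proof (cases "i = j")
      case True
      then have "(\<integral>x. f (x i) * f (x j) \<partial>PP n) = (\<integral>y. (f y)\<^sup>2 \<partial>M)"
        using int1[of i n "\<lambda>y. (f y)\<^sup>2"] i by (simp add: power2_eq_square)
      then show ?thesis using True by simp
    next
      case False
      then show ?thesis using prodint[of i n j f f] i j fb by (simp add: power2_eq_square)
    qed
  qed
  also have "\<dots> = n * (\<integral>y. (f y)\<^sup>2 \<partial>M) + (n * integral\<^sup>L M f)\<^sup>2"
    by (simp add: sum.distrib power_mult_distrib power2_eq_square algebra_simps)
  finally show ?thesis .
qed

lemma cheb:
  fixes f :: "'a \<Rightarrow> real"
  assumes f[measurable]: "f \<in> borel_measurable M" and fb: "\<And>x. x \<in> space M \<Longrightarrow> \<bar>f x\<bar> \<le> 1"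
    and m: "0 < integral\<^sup>L M f" and n: "0 < n"
  shows "measure (PP n) {x \<in> space (PP n). (\<Sum>i<n. f (x i)) \<le> 0} \<le> 1 / (n * (integral\<^sup>L M f)\<^sup>2)"
proof -
  interpret PPn: prob_space "PP n" by (rule probP)
  define m where "m = integral\<^sup>L M f"
  define t where "t = n * m"
  have t: "0 < t" using m n by (simp add: t_def m_def)
  let ?Y = "\<lambda>x. (\<Sum>i<n. f (x i))"
  have Yb: "\<bar>?Y x\<bar> \<le> n" if "x \<in> space (PP n)" for x
  proof -
    have "\<bar>?Y x\<bar> \<le> (\<Sum>i<n. \<bar>f (x i)\<bar>)" by (rule sum_abs)
    also have "\<dots> \<le> (\<Sum>i<n. 1)" using fb space_PP[OF that] by (intro sum_mono) auto
    finally show ?thesis by simp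
  qed
  have int_Y: "integrable (PP n) ?Y" using Yb by (intro integrable_bdd[where B=n]) auto
  have int_Y2: "integrable (PP n) (\<lambda>x. (?Y x)\<^sup>2)"
  proof (rule integrable_bdd[where B="(real n)^2"])
    fix x assume "x \<in> space (PP n)"
    then have "\<bar>?Y x\<bar>\<^sup>2 \<le> (real n)\<^sup>2" using Yb by (intro power_mono) auto
    then show "\<bar>(?Y x)\<^sup>2\<bar> \<le> (real n)^2" by simp
  qed simp
  have S: "{x \<in> space (PP n). ?Y x \<le> 0} \<in> sets (PP n)" by measurable
  have f2: "(\<integral>y. (f y)\<^sup>2 \<partial>M) \<le> 1"
  proof -
    interpret prob_space M by (rule PS)
    have "(\<integral>y. (f y)\<^sup>2 \<partial>M) \<le> (\<integral>y. 1 \<partial>M)"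
    proof (intro integral_mono)
      show "integrable M (\<lambda>y. (f y)\<^sup>2)"
        using fb by (intro integrable_M[where B=1]) (auto simp: abs_square_le_1)
      fix y assume "y \<in> space M" then show "(f y)\<^sup>2 \<le> 1" using fb by (simp add: abs_square_le_1)
    qed simp
    then show ?thesis using prob_space by simp
  qed
  have "measure (PP n) {x \<in> space (PP n). ?Y x \<le> 0} = (\<integral>x. indicator {x \<in> space (PP n). ?Y x \<le> 0} x \<partial>PP n)"
    by simp
  also have "\<dots> \<le> (\<integral>x. ((?Y x)\<^sup>2 - 2 * t * ?Y x + t\<^sup>2) / t\<^sup>2 \<partial>PP n)"
  proof (rule integral_mono)
    show "integrable (PP n) (indicator {x \<in> space (PP n). ?Y x \<le> 0} :: _ \<Rightarrow> real)"
      using S by (intro integrable_bdd[where B=1]) auto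
    show "integrable (PP n) (\<lambda>x. ((?Y x)\<^sup>2 - 2 * t * ?Y x + t\<^sup>2) / t\<^sup>2)"
      using int_Y int_Y2 by (intro integrable_divide Bochner_Integration.integrable_add Bochner_Integration.integrable_diff integrable_mult_right PPn.integrable_const)
    fix x assume x: "x \<in> space (PP n)"
    have "(?Y x)\<^sup>2 - 2 * t * ?Y x + t\<^sup>2 = (?Y x - t)\<^sup>2" by (simp add: power2_diff)
    moreover have "?Y x \<le> 0 \<Longrightarrow> t\<^sup>2 \<le> (?Y x - t)\<^sup>2"
    proof -
      assume "?Y x \<le> 0"
      then have "t\<^sup>2 \<le> (t - ?Y x)\<^sup>2" using t by (intro power_mono) auto
      then show ?thesis by (simp add: power2_commute)
    qed
    ultimately show "indicator {x \<in> space (PP n). ?Y x \<le> 0} x \<le> ((?Y x)\<^sup>2 - 2 * t * ?Y x + t\<^sup>2) / t\<^sup>2"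
      using t x by (auto simp: indicator_def)
  qed
  also have "\<dots> = ((\<integral>x. (?Y x)\<^sup>2 \<partial>PP n) - 2 * t * (\<integral>x. ?Y x \<partial>PP n) + t\<^sup>2) / t\<^sup>2"
    using int_Y int_Y2 PPn.prob_space by simp
  also have "\<dots> \<le> (n + t\<^sup>2 - 2 * t * t + t\<^sup>2) / t\<^sup>2"
  proof -
    have "(\<integral>x. (?Y x)\<^sup>2 \<partial>PP n) \<le> n + t\<^sup>2"
    proof -
      have "real n * (\<integral>y. (f y)\<^sup>2 \<partial>M) \<le> real n * 1" using f2 by (intro mult_left_mono) auto
      then show ?thesis using sq_int[OF f fb, of n] unfolding t_def m_def by simp
    qed
    moreover have "(\<integral>x. ?Y x \<partial>PP n) = t" using lin_int[OF f fb] by (simp add: t_def m_def)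
    ultimately show ?thesis using t by (intro divide_right_mono) auto
  qed
  also have "\<dots> = 1 / (n * m\<^sup>2)" using t n unfolding t_def by (simp add: field_simps power2_eq_square)
  finally show ?thesis by (simp add: m_def)
qed

end

lemma cnt: "(\<Sum>i<(n::nat). indicator A (x i) :: real) = real (card {i. i < n \<and> x i \<in> A})"
proof -
  have e: "{i. i < n \<and> x i \<in> A} = {i\<in>{..<n}. x i \<in> A}" by auto
  have "real (card {i\<in>{..<n}. x i \<in> A}) = (\<Sum>i\<in>{i\<in>{..<n}. x i \<in> A}. 1)"
    by (simp only: real_of_card)
  also have "\<dots> = (\<Sum>i<n. if x i \<in> A then 1 else 0)"
    by (rule sum.inter_filter) simp
  also have "\<dots> = (\<Sum>i<n. indicator A (x i))"
    by (rule sum.cong) (simp_all add: indicator_def)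
  finally show ?thesis unfolding e by simp
qed

context G begin

lemma case_iii:
  assumes A: "A \<in> sets M" and B: "B \<in> sets M" and disj: "A \<inter> B = {}"
    and ae: "AE p in M \<Otimes>\<^sub>M M. p \<in> A \<times> (A \<union> B) \<longrightarrow> W (fst p) (snd p) = 0"
    and pos: "measure M A > measure M (space M - (A \<union> B))" and n: "0 < n"
  shows "ham_prob M W n \<le> 1 / (n * (measure M A - measure M (space M - (A \<union> B)))\<^sup>2)"
proof -
  interpret prob_space M by (rule PS)
  define Cc where "Cc = space M - (A \<union> B)"
  have Cc: "Cc \<in> sets M" using A B by (auto simp: Cc_def)
  define f where "f = (\<lambda>y. indicator A y - indicator Cc y :: real)"
  have f[measurable]: "f \<in> borel_measurable M" using A Cc by (simp add: f_def)
  have fb: "\<bar>f y\<bar> \<le> 1" for y by (auto simp: f_def indicator_def)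
  have intf: "integral\<^sup>L M f = measure M A - measure M Cc"
    unfolding f_def using A Cc
    by (subst Bochner_Integration.integral_diff) (auto simp: integrable_indicator_iff less_top[symmetric])
  let ?C = "{x \<in> space (PP n). (\<Sum>i<n. f (x i)) \<le> 0}"
  have C: "?C \<in> sets (PP n)" by measurable
  have "AE x in PP n. \<forall>E. E \<subseteq> all_pairs n \<longrightarrow> hamiltonian n E \<longrightarrow> graph_prob W n x E \<noteq> 0 \<longrightarrow> x \<in> ?C"
    using AEpairs[OF ae, of n] AE_space
  proof eventually_elim
    case (elim x)
    show ?case
    proof (intro allI impI)
      fix E assume E: "E \<subseteq> all_pairs n" "hamiltonian n E" "graph_prob W n x E \<noteq> 0"
      have sym: "\<And>i j. i < n \<Longrightarrow> j < n \<Longrightarrow> W (x i) (x j) = W (x j) (x i)"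
        using elim(2) by (intro Wsym space_PP) auto
      obtain p where p: "bij_betw p {..<n} {..<n}" and n3: "3 \<le> n"
        and nz: "\<And>k. k < n \<Longrightarrow> W (x (p k)) (x (p (Suc k mod n))) \<noteq> 0"
        using ham_edges[OF E(2) E(1) E(3) sym] by blast
      have step: "x (p (Suc k mod n)) \<in> Cc" if k: "k < n" and xs: "x (p k) \<in> A" for k
      proof (rule ccontr)
        assume nC: "x (p (Suc k mod n)) \<notin> Cc"
        have k1: "Suc k mod n < n" using n3 by simp
        have pk: "p k < n" "p (Suc k mod n) < n" using bij_betwE[OF p] k k1 by auto
        have ne: "p k \<noteq> p (Suc k mod n)"
          using p k k1 succ_ne[OF n3 k] by (auto simp: bij_betw_def inj_on_def)
        have "x (p (Suc k mod n)) \<in> A \<union> B" using nC space_PP[OF elim(2) pk(2)] by (auto simp: Cc_def)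
        then have "(x (p k), x (p (Suc k mod n))) \<in> A \<times> (A \<union> B)" using xs by simp
        then have "W (x (p k)) (x (p (Suc k mod n))) = 0"
          using elim(1)[rule_format, OF pk ne] by simp
        with nz[OF k] show False by simp
      qed
      have le: "card {i. i < n \<and> x i \<in> A} \<le> card {i. i < n \<and> x i \<in> Cc}"
        by (rule count_inj[of p n x A Cc, OF p step])
      have "(\<Sum>i<n. f (x i)) = (\<Sum>i<n. indicator A (x i)) - (\<Sum>i<n. indicator Cc (x i))"
        by (simp add: f_def sum_subtractf)
      also have "\<dots> \<le> 0" unfolding cnt using le by simp
      finally show "x \<in> ?C" using elim(2) by simp
    qed
  qed
  then have "ham_prob M W n \<le> measure (PP n) ?C" by (rule reduce[OF C])
  also have "\<dots> \<le> 1 / (n * (integral\<^sup>L M f)\<^sup>2)"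
  proof -
    have mpos: "0 < integral\<^sup>L M f" using intf pos unfolding Cc_def by linarith
    show ?thesis by (rule cheb[OF f fb mpos n])
  qed
  finally show ?thesis unfolding intf Cc_def .
qed

end

lemma central_binom_sq: "(real ((2*m) choose m))\<^sup>2 * (2*m+1) \<le> 16^m"
proof (induction m)
  case 0 then show ?case by simp
next
  case (Suc m)
  have r1: "Suc m * (Suc (Suc (m+m)) choose Suc m) = Suc (Suc (m+m)) * (Suc (m+m) choose m)"
    by (rule Suc_times_binomial)
  have r2: "Suc m * (Suc (m + m) choose Suc m) = Suc m * (Suc (m + m) choose m)"
    by (rule Suc_times_binomial_add)
  have b: "(Suc (m + m) choose Suc m) = (Suc (m + m) choose m)"
    by (rule mult_left_cancel[THEN iffD1, OF _ r2]) simp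
  have r3: "Suc m * (Suc (m+m) choose Suc m) = Suc (m+m) * ((m+m) choose m)"
    by (rule Suc_times_binomial)
  define X where "X = real (Suc (Suc (m+m)) choose Suc m)"
  define Y where "Y = real (Suc (m+m) choose m)"
  define c0 where "c0 = real ((m+m) choose m)"
  have R1: "(m+1) * X = (2*m+2) * Y" using arg_cong[OF r1, of real] unfolding X_def Y_def by (simp add: algebra_simps del: binomial_Suc_Suc)
  have R3: "(m+1) * Y = (2*m+1) * c0" using arg_cong[OF r3, of real] b unfolding Y_def c0_def by (simp add: algebra_simps del: binomial_Suc_Suc)
  have E1: "(m+1) * X = 2 * ((m+1) * Y)" using R1 by (simp add: algebra_simps del: binomial_Suc_Suc)
  have E: "(m+1) * X = 2 * ((2*m+1) * c0)" unfolding E1 R3 ..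
  have t1: "2 * Suc m = Suc (Suc (m+m))" and t2: "2 * m = m + m" by simp_all
  have e: "real (Suc m) * real ((2 * Suc m) choose Suc m) = 2 * (2*m+1) * real ((2*m) choose m)"
    unfolding t1 t2 using E unfolding X_def c0_def by (simp add: algebra_simps del: binomial_Suc_Suc)
  define c where "c = real ((2*m) choose m)"
  define d where "d = real ((2 * Suc m) choose Suc m)"
  define r where "r = real m"
  have d: "d = 2 * (2*r+1) * c / (r+1)" using e unfolding c_def d_def r_def by (simp add: field_simps)
  have "d\<^sup>2 * (2 * Suc m + 1) = 4*(2*r+1)^2*(2*r+3)/(r+1)^2 * c\<^sup>2"
    unfolding d r_def by (simp add: field_simps power2_eq_square)
  also have "\<dots> \<le> 16 * ((2*r+1) * c\<^sup>2)"
  proof -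
    have h1: "4*(2*r+1)*(2*r+3) \<le> 16*(r+1)^2" by (simp add: power2_eq_square algebra_simps)
    have h2: "0 \<le> (2*r+1)*c\<^sup>2" by (simp add: r_def)
    have "4*(2*r+1)^2*(2*r+3) * c\<^sup>2 \<le> 16*((2*r+1)*c\<^sup>2) * (r+1)^2"
      using mult_right_mono[OF h1 h2] by (simp add: power2_eq_square algebra_simps)
    moreover have "0 < (r+1)^2" by (simp add: r_def)
    ultimately show ?thesis by (simp add: divide_le_eq)
  qed
  also have "\<dots> \<le> 16 * 16^m" using Suc.IH unfolding c_def r_def by (simp add: algebra_simps)
  finally show ?case unfolding d_def by simp
qed

lemma central_binom_bound: "real ((2*m) choose m) / 4^m \<le> 1 / sqrt (2*m+1)"
proof -
  define c where "c = real ((2*m) choose m)"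
  define q where "q = (4::real)^m"
  have q: "0 < q" unfolding q_def by simp
  have q2: "q * q = 16^m" unfolding q_def by (simp flip: power_mult_distrib)
  have A: "c\<^sup>2 * (2*m+1) \<le> q * q" using central_binom_sq[of m] unfolding c_def q2 .
  have "(c / q)\<^sup>2 = c\<^sup>2 / (q * q)" by (simp add: power2_eq_square)
  also have "\<dots> \<le> 1 / (2*m+1)"
    using A q by (simp add: divide_le_eq le_divide_eq)
  also have "\<dots> = (1 / sqrt (2*m+1))\<^sup>2" by (simp add: power_divide)
  finally have "(c / q)\<^sup>2 \<le> (1 / sqrt (2*m+1))\<^sup>2" .
  then have "c / q \<le> 1 / sqrt (2*m+1)" by (rule power2_le_imp_le) simp
  then show ?thesis unfolding c_def q_def .
qed

context G begin

lemma binom_measure: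
  assumes S: "S \<in> sets M" and T: "T \<in> sets M" and disj: "S \<inter> T = {}" and cov: "S \<union> T = space M"
  shows "measure (PP n) {x \<in> space (PP n). card {i. i < n \<and> x i \<in> S} = k}
           = (n choose k) * measure M S ^ k * measure M T ^ (n - k)"
proof -
  define F where "F = {K. K \<subseteq> {..<n} \<and> card K = k}"
  define bx where "bx K = Pi\<^sub>E {..<n} (\<lambda>i. if i \<in> K then S else T)" for K
  have finF: "finite F" unfolding F_def by (rule finite_subset[of _ "Pow {..<n}"]) auto
  have Ssp: "S \<subseteq> space M" and Tsp: "T \<subseteq> space M" using cov by auto
  have bxsets: "bx K \<in> sets (PP n)" for K unfolding bx_def using S T by (intro box_sets) auto
  have eq: "{x \<in> space (PP n). card {i. i < n \<and> x i \<in> S} = k} = (\<Union>K\<in>F. bx K)"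
  proof
    show "{x \<in> space (PP n). card {i. i < n \<and> x i \<in> S} = k} \<subseteq> (\<Union>K\<in>F. bx K)"
    proof
      fix x assume x: "x \<in> {x \<in> space (PP n). card {i. i < n \<and> x i \<in> S} = k}"
      let ?K = "{i. i < n \<and> x i \<in> S}"
      have "?K \<in> F" using x by (auto simp: F_def)
      moreover have "x \<in> bx ?K" unfolding bx_def
      proof (rule in_box)
        show "x \<in> space (PP n)" using x by simp
        show "\<forall>i<n. x i \<in> (if i \<in> ?K then S else T)"
          using space_PP[of x n] x cov by auto
      qed
      ultimately show "x \<in> (\<Union>K\<in>F. bx K)" by blast
    qed
    show "(\<Union>K\<in>F. bx K) \<subseteq> {x \<in> space (PP n). card {i. i < n \<and> x i \<in> S} = k}"
    proof
      fix x assume "x \<in> (\<Union>K\<in>F. bx K)"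
      then obtain K where K: "K \<in> F" and xK: "x \<in> bx K" by blast
      have "\<forall>i<n. x i \<in> space M"
      proof (intro allI impI)
        fix i assume "i < n"
        then show "x i \<in> space M" using PiE_mem[OF xK[unfolded bx_def], of i] Ssp Tsp by (auto split: if_splits)
      qed
      then have xs: "x \<in> space (PP n)" using xK by (auto simp: bx_def space_PiM PiE_iff)
      have mem: "\<And>i. i < n \<Longrightarrow> x i \<in> (if i \<in> K then S else T)"
        using PiE_mem[OF xK[unfolded bx_def]] by simp
      have KS: "K \<subseteq> {..<n}" using K by (simp add: F_def)
      have "{i. i < n \<and> x i \<in> S} = K"
      proof (intro set_eqI iffI)
        fix i assume "i \<in> {i. i < n \<and> x i \<in> S}"
        then have i: "i < n" "x i \<in> S" by auto
        show "i \<in> K"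
        proof (rule ccontr)
          assume "i \<notin> K" then have "x i \<in> T" using mem[OF i(1)] by simp
          then show False using i disj by auto
        qed
      next
        fix i assume i: "i \<in> K"
        then have "i < n" using KS by auto
        then show "i \<in> {i. i < n \<and> x i \<in> S}" using mem[of i] i by simp
      qed
      then show "x \<in> {x \<in> space (PP n). card {i. i < n \<and> x i \<in> S} = k}" using xs K by (simp add: F_def)
    qed
  qed
  have disjf: "disjoint_family_on bx F"
  unfolding disjoint_family_on_def
  proof (intro ballI impI)
    fix K K' assume K: "K \<in> F" "K' \<in> F" "K \<noteq> K'"
    then obtain i where i: "i < n" "(i \<in> K) \<noteq> (i \<in> K')" unfolding F_def by blast
    show "bx K \<inter> bx K' = {}"
    proof (rule ccontr)
      assume "bx K \<inter> bx K' \<noteq> {}"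
      then obtain x where x1: "x \<in> bx K" and x2: "x \<in> bx K'" by blast
      have "x i \<in> (if i \<in> K then S else T)" using PiE_mem[OF x1[unfolded bx_def], of i] i(1) by simp
      moreover have "x i \<in> (if i \<in> K' then S else T)" using PiE_mem[OF x2[unfolded bx_def], of i] i(1) by simp
      ultimately have "x i \<in> (if i \<in> K then S else T)" "x i \<in> (if i \<in> K' then S else T)" by auto
      then show False using i disj by (auto split: if_splits)
    qed
  qed
  have "measure (PP n) (\<Union>K\<in>F. bx K) = (\<Sum>K\<in>F. measure (PP n) (bx K))"
  proof (rule measure_finite_Union[OF finF _ disjf])
    show "bx ` F \<subseteq> sets (PP n)" using bxsets by auto
    fix K show "emeasure (PP n) (bx K) \<noteq> \<infinity>"
    proof -
      interpret prob_space "PP n" by (rule probP)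
      show ?thesis by simp
    qed
  qed
  also have "\<dots> = (\<Sum>K\<in>F. measure M S ^ k * measure M T ^ (n - k))"
  proof (rule sum.cong[OF refl])
    fix K assume K: "K \<in> F"
    have "measure (PP n) (bx K) = (\<Prod>i<n. measure M (if i \<in> K then S else T))"
      unfolding bx_def using S T by (intro box) auto
    also have "\<dots> = (\<Prod>i<n. if i \<in> K then measure M S else measure M T)"
      by (intro prod.cong) auto
    also have "\<dots> = measure M S ^ card ({..<n} \<inter> K) * measure M T ^ card ({..<n} - K)"
        by (simp only: prod.If_cases[OF finite_lessThan] Collect_mem_eq Diff_eq[symmetric] prod_constant)
    also have "{..<n} \<inter> K = K" using K by (auto simp: F_def)
    also have "card ({..<n} - K) = n - k"
    proof -
      have KS: "K \<subseteq> {..<n}" and ck: "card K = k" using K by (auto simp: F_def)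
      have "finite K" using KS finite_lessThan by (rule finite_subset)
      then have "card ({..<n} - K) = card {..<n} - card K" using KS by (rule card_Diff_subset)
      then show ?thesis using ck by simp
    qed
    finally show "measure (PP n) (bx K) = measure M S ^ k * measure M T ^ (n - k)" using K by (simp add: F_def)
  qed
  also have "\<dots> = (n choose k) * measure M S ^ k * measure M T ^ (n - k)"
    using n_subsets[of "{..<n}" k] by (simp add: F_def)
  finally show ?thesis unfolding eq .
qed

end

context G begin

lemma case_iv:
  assumes S: "S \<in> sets M" and T: "T \<in> sets M" and disj: "S \<inter> T = {}" and cov: "S \<union> T = space M"
    and mS: "measure M S = 1/2" and mT: "measure M T = 1/2"
    and ae: "AE p in M \<Otimes>\<^sub>M M. p \<in> (S \<times> S) \<union> (T \<times> T) \<longrightarrow> W (fst p) (snd p) = 0"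
  shows "ham_prob M W n \<le> 1 / sqrt (real n + 1)"
proof -
  have key: "2 * card {i. i < n \<and> x i \<in> S} = n"
    if elim: "\<forall>i<n. \<forall>j<n. i \<noteq> j \<longrightarrow> (x i, x j) \<in> (S \<times> S) \<union> (T \<times> T) \<longrightarrow> W (fst (x i, x j)) (snd (x i, x j)) = 0"
      "x \<in> space (PP n)"
      and E: "E \<subseteq> all_pairs n" "hamiltonian n E" "graph_prob W n x E \<noteq> 0" for x E
  proof -
    have sym: "\<And>i j. i < n \<Longrightarrow> j < n \<Longrightarrow> W (x i) (x j) = W (x j) (x i)"
      using elim(2) by (intro Wsym space_PP) auto
    obtain p where p: "bij_betw p {..<n} {..<n}" and n3: "3 \<le> n"
      and nz: "\<And>k. k < n \<Longrightarrow> W (x (p k)) (x (p (Suc k mod n))) \<noteq> 0"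
      using ham_edges[OF E(2) E(1) E(3) sym] by blast
    have gen: "x (p (Suc k mod n)) \<in> V" if k: "k < n" and xs: "x (p k) \<in> U"
      and UV: "U \<times> U \<subseteq> (S \<times> S) \<union> (T \<times> T)" "\<And>y. y \<in> space M \<Longrightarrow> y \<notin> U \<Longrightarrow> y \<in> V" for k U V
    proof (rule ccontr)
      assume nV: "x (p (Suc k mod n)) \<notin> V"
      have k1: "Suc k mod n < n" using n3 by simp
      have pk: "p k < n" "p (Suc k mod n) < n" using bij_betwE[OF p] k k1 by auto
      have ne: "p k \<noteq> p (Suc k mod n)"
        using p k k1 succ_ne[OF n3 k] by (auto simp: bij_betw_def inj_on_def)
      have "x (p (Suc k mod n)) \<in> U" using nV UV(2) space_PP[OF elim(2) pk(2)] by blast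
      then have "(x (p k), x (p (Suc k mod n))) \<in> (S \<times> S) \<union> (T \<times> T)" using xs UV(1) by blast
      then have "W (x (p k)) (x (p (Suc k mod n))) = 0"
        using elim(1)[rule_format, OF pk ne] by simp
      with nz[OF k] show False by simp
    qed
    have st1: "x (p (Suc k mod n)) \<in> T" if "k < n" "x (p k) \<in> S" for k
      using gen[OF that, of T] cov by auto
    have st2: "x (p (Suc k mod n)) \<in> S" if "k < n" "x (p k) \<in> T" for k
      using gen[OF that, of S] cov by auto
    have c1: "card {i. i < n \<and> x i \<in> S} \<le> card {i. i < n \<and> x i \<in> T}"
      by (rule count_inj[of p n x S T, OF p st1])
    have c2: "card {i. i < n \<and> x i \<in> T} \<le> card {i. i < n \<and> x i \<in> S}"
      by (rule count_inj[of p n x T S, OF p st2])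
    have un: "{i. i < n \<and> x i \<in> S} \<union> {i. i < n \<and> x i \<in> T} = {..<n}"
      using cov space_PP[OF elim(2)] by auto
    have "card {i. i < n \<and> x i \<in> S} + card {i. i < n \<and> x i \<in> T} = card {..<n}"
      unfolding un[symmetric] using disj by (intro card_Un_disjoint[symmetric]) auto
    then show ?thesis using c1 c2 by simp
  qed
  show ?thesis
  proof (cases "even n")
    case False
    have "AE x in PP n. \<forall>E. E \<subseteq> all_pairs n \<longrightarrow> hamiltonian n E \<longrightarrow> graph_prob W n x E \<noteq> 0 \<longrightarrow> x \<in> {}"
      using AEpairs[OF ae, of n] AE_space
    proof eventually_elim
      case (elim x)
      show ?case
      proof (intro allI impI)
        fix E assume E: "E \<subseteq> all_pairs n" "hamiltonian n E" "graph_prob W n x E \<noteq> 0"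
        have "2 * card {i. i < n \<and> x i \<in> S} = n" by (rule key[OF elim E])
        then have "even n" by (metis dvd_triv_left)
        with False show "x \<in> {}" by simp
      qed
    qed
    then have "ham_prob M W n \<le> measure (PP n) {}" by (intro reduce) auto
    then have h0: "ham_prob M W n \<le> 0" by simp
    have "0 \<le> 1 / sqrt (real n + 1)" by (intro divide_nonneg_nonneg) auto
    with h0 show ?thesis by linarith
  next
    case True
    then obtain m where m: "n = 2 * m" by blast
    let ?C = "{x \<in> space (PP n). (\<Sum>i<n. indicator S (x i)) = real m}"
    have C: "?C \<in> sets (PP n)" using S by measurable
    have Ceq: "?C = {x \<in> space (PP n). card {i. i < n \<and> x i \<in> S} = m}"
      unfolding cnt by simp
    have "AE x in PP n. \<forall>E. E \<subseteq> all_pairs n \<longrightarrow> hamiltonian n E \<longrightarrow> graph_prob W n x E \<noteq> 0 \<longrightarrow> x \<in> ?C"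
      using AEpairs[OF ae, of n] AE_space
    proof eventually_elim
      case (elim x)
      show ?case
      proof (intro allI impI)
        fix E assume E: "E \<subseteq> all_pairs n" "hamiltonian n E" "graph_prob W n x E \<noteq> 0"
        have "2 * card {i. i < n \<and> x i \<in> S} = n" by (rule key[OF elim E])
        then have "card {i. i < n \<and> x i \<in> S} = m" using m by simp
        then show "x \<in> ?C" using elim(2) Ceq by simp
      qed
    qed
    then have "ham_prob M W n \<le> measure (PP n) ?C" by (rule reduce[OF C])
    also have "\<dots> = (n choose m) * measure M S ^ m * measure M T ^ (n - m)"
      unfolding Ceq by (rule binom_measure[OF S T disj cov])
    also have "\<dots> = real ((2*m) choose m) / 4^m"
    proof -
      have "(1/2::real)^m * (1/2)^m = 1 / 4^m" by (simp add: power_divide flip: power_mult_distrib)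
      then show ?thesis unfolding mS mT m by (simp only: diff_add_inverse2 mult_2 add_diff_cancel_right' mult.assoc) simp
    qed
    also have "\<dots> \<le> 1 / sqrt (2*m+1)" by (rule central_binom_bound)
    also have "\<dots> = 1 / sqrt (real n + 1)" using m by simp
    finally show ?thesis .
  qed
qed

end

definition Qi :: "nat \<Rightarrow> nat \<Rightarrow> (nat \<times> nat) set" where
  "Qi n i = {e \<in> all_pairs n. fst e = i \<or> snd e = i}"

lemma Qi_sub: "Qi n i \<subseteq> all_pairs n" by (auto simp: Qi_def)

lemma Qi_sum:
  assumes i: "i < n" and sym: "\<And>a b. a < n \<Longrightarrow> b < n \<Longrightarrow> W (x a) (x b) = W (x b) (x a)"
  shows "(\<Sum>e\<in>Qi n i. W (x (fst e)) (x (snd e))) = (\<Sum>j\<in>{..<n}-{i}. W (x i) (x j))"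
proof -
  let ?g = "\<lambda>j. (min i j, max i j)"
  have bij: "bij_betw ?g ({..<n}-{i}) (Qi n i)"
  proof (rule bij_betwI')
    show "\<And>a b. a \<in> {..<n}-{i} \<Longrightarrow> b \<in> {..<n}-{i} \<Longrightarrow> (?g a = ?g b) = (a = b)"
      by (auto simp: min_def max_def split: if_splits)
    show "\<And>a. a \<in> {..<n}-{i} \<Longrightarrow> ?g a \<in> Qi n i"
      using i by (auto simp: Qi_def all_pairs_def min_def max_def)
    show "\<And>e. e \<in> Qi n i \<Longrightarrow> \<exists>a\<in>{..<n}-{i}. e = ?g a"
    proof -
      fix e assume "e \<in> Qi n i"
      then obtain a b where e: "e = (a, b)" "a < b" "b < n" "a = i \<or> b = i"
        by (auto simp: Qi_def all_pairs_def)
      show "\<exists>a\<in>{..<n}-{i}. e = ?g a"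
      proof (cases "a = i")
        case True then show ?thesis using e by (intro bexI[of _ b]) (auto simp: min_def max_def)
      next
        case False then show ?thesis using e by (intro bexI[of _ a]) (auto simp: min_def max_def)
      qed
    qed
  qed
  have "(\<Sum>e\<in>Qi n i. W (x (fst e)) (x (snd e))) = (\<Sum>j\<in>{..<n}-{i}. W (x (fst (?g j))) (x (snd (?g j))))"
    by (rule sum.reindex_bij_betw[OF bij, symmetric])
  also have "\<dots> = (\<Sum>j\<in>{..<n}-{i}. W (x i) (x j))"
  proof (rule sum.cong[OF refl])
    fix j assume j: "j \<in> {..<n}-{i}"
    show "W (x (fst (?g j))) (x (snd (?g j))) = W (x i) (x j)"
      using sym[of j i] i j by (cases "i \<le> j") (auto simp: min_def max_def)
  qed
  finally show ?thesis .
qed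

lemma pointwise_ii:
  fixes W :: "'a \<Rightarrow> 'a \<Rightarrow> real" and x :: "nat \<Rightarrow> 'a"
  assumes sym: "\<And>a b. a < n \<Longrightarrow> b < n \<Longrightarrow> W (x a) (x b) = W (x b) (x a)"
    and w01: "\<And>a b. a < n \<Longrightarrow> b < n \<Longrightarrow> 0 \<le> W (x a) (x b) \<and> W (x a) (x b) \<le> 1"
    and t: "0 < t"
  shows "(\<Sum>E \<in> {E. E \<subseteq> all_pairs n \<and> hamiltonian n E}. graph_prob W n x E)
    \<le> ((\<Sum>i<n. indicator D (x i))\<^sup>2
        - 2 * t * (\<Sum>i<n. indicator D (x i) * (1 - (\<Sum>j\<in>{..<n}-{i}. W (x i) (x j)))) + t\<^sup>2) / t\<^sup>2"
proof -
  define P where "P = all_pairs n"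
  define w where "w e = W (x (fst e)) (x (snd e))" for e
  define gp where "gp E = gpw w P E" for E
  define cD where "cD = (\<Sum>i<n. indicator D (x i) :: real)"
  define Z where "Z E = (\<Sum>i<n. indicator D (x i) * (if E \<inter> Qi n i = {} then 1 else 0 :: real))" for E
  have finP: "finite P" unfolding P_def by (rule finite_all_pairs)
  have wP: "\<And>e. e \<in> P \<Longrightarrow> 0 \<le> w e \<and> w e \<le> 1" using w01 by (auto simp: w_def P_def all_pairs_def)
  have wfun: "w = (\<lambda>e. W (x (fst e)) (x (snd e)))" by (rule ext) (simp add: w_def)
  have gp_eq: "graph_prob W n x E = gp E" for E by (simp add: graph_prob_gpw gp_def wfun P_def)
  have gp_nn: "0 \<le> gp E" for E unfolding gp_def using wP by (rule gpw_nonneg)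
  have gp_tot: "(\<Sum>E\<in>Pow P. gp E) = 1" unfolding gp_def using finP by (rule gpw_total)
  have Z_nn: "0 \<le> Z E" for E unfolding Z_def by (intro sum_nonneg) auto
  have Z_le: "Z E \<le> cD" for E unfolding Z_def cD_def by (intro sum_mono) (auto simp: indicator_def)
  have H: "{E. E \<subseteq> all_pairs n \<and> hamiltonian n E} \<subseteq> Pow P" by (auto simp: P_def)
  have Zham: "Z E = 0" if "E \<subseteq> P" "hamiltonian n E" for E
  proof -
    have "E \<inter> Qi n i \<noteq> {}" if i: "i < n" for i
    proof -
      obtain e where e: "e \<in> E" "fst e = i \<or> snd e = i" using ham_touch[OF \<open>hamiltonian n E\<close> i] by blast
      then have "e \<in> Qi n i" using \<open>E \<subseteq> P\<close> by (auto simp: Qi_def P_def)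
      then show ?thesis using e by blast
    qed
    then show ?thesis unfolding Z_def by (intro sum.neutral) auto
  qed
  have "(\<Sum>E \<in> {E. E \<subseteq> all_pairs n \<and> hamiltonian n E}. graph_prob W n x E)
      = (\<Sum>E \<in> {E. E \<subseteq> all_pairs n \<and> hamiltonian n E}. gp E * ((Z E - t)\<^sup>2 / t\<^sup>2))"
    using t by (intro sum.cong refl) (auto simp: gp_eq Zham P_def)
  also have "\<dots> \<le> (\<Sum>E\<in>Pow P. gp E * ((Z E - t)\<^sup>2 / t\<^sup>2))"
    using finP H gp_nn by (intro sum_mono2) auto
  also have "\<dots> = ((\<Sum>E\<in>Pow P. gp E * (Z E)\<^sup>2) - 2 * t * (\<Sum>E\<in>Pow P. gp E * Z E) + t\<^sup>2 * (\<Sum>E\<in>Pow P. gp E)) / t\<^sup>2"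
  proof -
    have e1: "gp E * ((Z E - t)\<^sup>2 / t\<^sup>2) = (gp E * (Z E)\<^sup>2 - 2 * t * (gp E * Z E) + t\<^sup>2 * gp E) / t\<^sup>2" for E
      using t by (simp add: power2_diff field_simps)
    have "(\<Sum>E\<in>Pow P. gp E * ((Z E - t)\<^sup>2 / t\<^sup>2)) = (\<Sum>E\<in>Pow P. gp E * (Z E)\<^sup>2 - 2 * t * (gp E * Z E) + t\<^sup>2 * gp E) / t\<^sup>2"
      unfolding e1 by (rule sum_divide_distrib[symmetric])
    also have "(\<Sum>E\<in>Pow P. gp E * (Z E)\<^sup>2 - 2 * t * (gp E * Z E) + t\<^sup>2 * gp E)
       = (\<Sum>E\<in>Pow P. gp E * (Z E)\<^sup>2) - 2 * t * (\<Sum>E\<in>Pow P. gp E * Z E) + t\<^sup>2 * (\<Sum>E\<in>Pow P. gp E)"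
      by (simp add: sum.distrib sum_subtractf sum_distrib_left)
    finally show ?thesis .
  qed
  also have "\<dots> \<le> (cD\<^sup>2 - 2 * t * (\<Sum>i<n. indicator D (x i) * (1 - (\<Sum>j\<in>{..<n}-{i}. W (x i) (x j)))) + t\<^sup>2) / t\<^sup>2"
  proof -
    have A: "(\<Sum>E\<in>Pow P. gp E * (Z E)\<^sup>2) \<le> cD\<^sup>2"
    proof -
      have "(\<Sum>E\<in>Pow P. gp E * (Z E)\<^sup>2) \<le> (\<Sum>E\<in>Pow P. gp E * cD\<^sup>2)"
        using gp_nn Z_nn Z_le by (intro sum_mono mult_left_mono power_mono) auto
      also have "\<dots> = cD\<^sup>2" using gp_tot by (simp add: sum_distrib_right[symmetric])
      finally show ?thesis .
    qed
    have B: "(\<Sum>i<n. indicator D (x i) * (1 - (\<Sum>j\<in>{..<n}-{i}. W (x i) (x j)))) \<le> (\<Sum>E\<in>Pow P. gp E * Z E)"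
    proof -
      have "(\<Sum>E\<in>Pow P. gp E * Z E) = (\<Sum>i<n. indicator D (x i) * (\<Sum>E\<in>Pow P. if E \<inter> Qi n i = {} then gp E else 0))"
        unfolding Z_def by (simp add: sum_distrib_left sum_distrib_right mult_ac if_distrib cong: if_cong) (rule sum.swap)
      also have "\<dots> = (\<Sum>i<n. indicator D (x i) * (\<Prod>e\<in>Qi n i. 1 - w e))"
      proof (intro sum.cong refl)
        fix i assume "i \<in> {..<n}"
        have QP: "Qi n i \<subseteq> P" by (simp add: Qi_sub P_def)
        show "indicator D (x i) * (\<Sum>E\<in>Pow P. if E \<inter> Qi n i = {} then gp E else 0) = indicator D (x i) * (\<Prod>e\<in>Qi n i. 1 - w e)"
          unfolding gp_def gpw_avoid[OF finP QP] ..
      qed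
      also have "\<dots> \<ge> (\<Sum>i<n. indicator D (x i) * (1 - (\<Sum>e\<in>Qi n i. w e)))"
      proof (intro sum_mono mult_left_mono)
        fix i assume "i \<in> {..<n}"
        show "1 - (\<Sum>e\<in>Qi n i. w e) \<le> (\<Prod>e\<in>Qi n i. 1 - w e)"
          using finP wP Qi_sub[of n i] by (intro prod_one_minus_ge) (auto simp: P_def intro: finite_subset)
      qed auto
      also have "(\<Sum>i<n. indicator D (x i) * (1 - (\<Sum>e\<in>Qi n i. w e)))
          = (\<Sum>i<n. indicator D (x i) * (1 - (\<Sum>j\<in>{..<n}-{i}. W (x i) (x j))))"
        unfolding wfun by (intro sum.cong refl) (simp add: Qi_sum[of _ n W x, OF _ sym])
      finally show ?thesis .
    qed
    have B2: "2 * t * (\<Sum>i<n. indicator D (x i) * (1 - (\<Sum>j\<in>{..<n}-{i}. W (x i) (x j)))) \<le> 2 * t * (\<Sum>E\<in>Pow P. gp E * Z E)"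
      using B t by (intro mult_left_mono) auto
    have "(\<Sum>E\<in>Pow P. gp E * (Z E)\<^sup>2) - 2 * t * (\<Sum>E\<in>Pow P. gp E * Z E) + t\<^sup>2 * (\<Sum>E\<in>Pow P. gp E)
       \<le> cD\<^sup>2 - 2 * t * (\<Sum>i<n. indicator D (x i) * (1 - (\<Sum>j\<in>{..<n}-{i}. W (x i) (x j)))) + t\<^sup>2"
      unfolding gp_tot using A B2 by linarith
    then show ?thesis using t by (intro divide_right_mono) auto
  qed
  finally show ?thesis unfolding cD_def .
qed

context G begin

lemma deg_meas[measurable]: "deg M W \<in> borel_measurable M"
proof -
  interpret prob_space M by (rule PS)
  have cp: "case_prod W = (\<lambda>p. W (fst p) (snd p))" by (rule ext) (simp add: case_prod_beta)
  have "case_prod W \<in> borel_measurable (M \<Otimes>\<^sub>M M)" unfolding cp by (rule Wmeas)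
  then have "(\<lambda>x. \<integral>y. W x y \<partial>M) \<in> borel_measurable M"
    by (rule borel_measurable_lebesgue_integral)
  then show ?thesis by (simp add: deg_def[abs_def])
qed

lemma D_sets[measurable]: "low_deg_set M W a \<in> sets M"
  unfolding low_deg_set_def by measurable

lemma indW:
  assumes ij: "i < n" "j < n" "i \<noteq> j"
  shows "(\<integral>x. indicator (low_deg_set M W a) (x i) * W (x i) (x j) \<partial>PP n) \<le> measure M (low_deg_set M W a) * a"
proof -
  interpret prob_space M by (rule PS)
  interpret P2: pair_prob_space M M by unfold_locales
  let ?D = "low_deg_set M W a"
  have "(\<integral>x. indicator ?D (x i) * W (x i) (x j) \<partial>PP n) = (\<integral>p. indicator ?D (fst p) * W (fst p) (snd p) \<partial>(M \<Otimes>\<^sub>M M))"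
    using int2[OF ij, of "\<lambda>p. indicator ?D (fst p) * W (fst p) (snd p)"] by simp
  also have "\<dots> = (\<integral>u. (\<integral>v. indicator ?D u * W u v \<partial>M) \<partial>M)"
  proof -
    have eq: "(\<lambda>(u, v). indicator ?D u * W u v) = (\<lambda>p. indicator ?D (fst p) * W (fst p) (snd p))"
      by (auto simp: fun_eq_iff)
    have "integrable (M \<Otimes>\<^sub>M M) (\<lambda>p. indicator ?D (fst p) * W (fst p) (snd p))"
    proof (rule integrable_MM[where B=1])
      fix p assume "p \<in> space (M \<Otimes>\<^sub>M M)"
      then have "fst p \<in> space M" "snd p \<in> space M" by (auto simp: space_pair_measure)
      then have "0 \<le> W (fst p) (snd p)" "W (fst p) (snd p) \<le> 1" using Wnn Wle1 by auto
      then show "\<bar>indicator ?D (fst p) * W (fst p) (snd p)\<bar> \<le> 1" by (auto simp: indicator_def)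
    qed measurable
    then have "integrable (M \<Otimes>\<^sub>M M) (\<lambda>(u, v). indicator ?D u * W u v)" unfolding eq .
    from P2.integral_fst[OF this] show ?thesis by (simp add: case_prod_beta')
  qed
  also have "\<dots> = (\<integral>u. indicator ?D u * deg M W u \<partial>M)" by (simp add: deg_def)
  also have "\<dots> \<le> (\<integral>u. indicator ?D u * a \<partial>M)"
  proof (rule integral_mono)
    show "integrable M (\<lambda>u. indicator ?D u * deg M W u)"
    proof (rule integrable_M[where B=1])
      fix u assume u: "u \<in> space M"
      have "0 \<le> deg M W u" unfolding deg_def by (rule Bochner_Integration.integral_nonneg) (use u Wnn in auto)
      moreover have "deg M W u \<le> 1"
      proof -
        have "deg M W u \<le> (\<integral>v. 1 \<partial>M)" unfolding deg_def
        proof (rule integral_mono)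
          show "integrable M (W u)"
          proof (rule integrable_M[where B=1])
            have "(\<lambda>v. (\<lambda>p. W (fst p) (snd p)) (u, v)) \<in> borel_measurable M"
              by (rule measurable_Pair2[OF Wmeas u])
            then show "W u \<in> borel_measurable M" by simp
          qed (use u Wnn Wle1 in auto)
        qed (use u Wle1 in auto)
        then show ?thesis using prob_space by simp
      qed
      ultimately show "\<bar>indicator ?D u * deg M W u\<bar> \<le> 1" by (auto simp: indicator_def)
    qed simp
    show "integrable M (\<lambda>u. indicator ?D u * a)"
      by (intro integrable_mult_left) (simp add: integrable_indicator_iff less_top[symmetric])
    fix u assume "u \<in> space M"
    then show "indicator ?D u * deg M W u \<le> indicator ?D u * a"
      by (auto simp: indicator_def low_deg_set_def)
  qed
  also have "\<dots> = measure M ?D * a" by simp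
  finally show ?thesis .
qed

end

context G begin

lemma case_ii_bound:
  assumes eps: "0 < \<epsilon>" "\<epsilon> < 1" and n: "0 < n"
    and mu: "0 < measure M (low_deg_set M W (\<epsilon> / n))"
  shows "ham_prob M W n \<le> (n * measure M (low_deg_set M W (\<epsilon> / n)) + (n * measure M (low_deg_set M W (\<epsilon> / n)))\<^sup>2)
            / (n * measure M (low_deg_set M W (\<epsilon> / n)) * (1 - \<epsilon>))\<^sup>2 - 1"
proof -
  interpret PPn: prob_space "PP n" by (rule probP)
  define a where "a = \<epsilon> / n"
  define D where "D = low_deg_set M W a"
  define \<mu> where "\<mu> = measure M D"
  define t where "t = n * \<mu> * (1 - \<epsilon>)"
  have Ds[measurable]: "D \<in> sets M" unfolding D_def by simp
  have mu0: "0 < \<mu>" using mu unfolding \<mu>_def D_def a_def .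
  have t: "0 < t" unfolding t_def using mu0 eps n by simp
  define cD where "cD x = (\<Sum>i<n. indicator D (x i) :: real)" for x :: "nat \<Rightarrow> 'a"
  define L where "L x = (\<Sum>i<n. indicator D (x i) * (1 - (\<Sum>j\<in>{..<n}-{i}. W (x i) (x j))))" for x :: "nat \<Rightarrow> 'a"
  define F where "F x = ((cD x)\<^sup>2 - 2 * t * L x + t\<^sup>2) / t\<^sup>2" for x
  have cD_meas[measurable]: "cD \<in> borel_measurable (PP n)" unfolding cD_def[abs_def] by measurable
  have iW_meas: "(\<lambda>x. indicator D (x i) * W (x i) (x j) :: real) \<in> borel_measurable (PP n)" if "i < n" "j < n" for i j
    using that by measurable
  have L_alt: "L x = (\<Sum>i<n. indicator D (x i) - (\<Sum>j\<in>{..<n}-{i}. indicator D (x i) * W (x i) (x j)))" for x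
    unfolding L_def by (simp add: right_diff_distrib sum_distrib_left)
  have L_meas: "L \<in> borel_measurable (PP n)"
  proof -
    have "(\<lambda>x. \<Sum>i<n. indicator D (x i) - (\<Sum>j\<in>{..<n}-{i}. indicator D (x i) * W (x i) (x j) :: real)) \<in> borel_measurable (PP n)"
    proof (rule borel_measurable_sum)
      fix i assume i: "i \<in> {..<n}"
      have "(\<lambda>x. \<Sum>j\<in>{..<n}-{i}. indicator D (x i) * W (x i) (x j) :: real) \<in> borel_measurable (PP n)"
        using i by (intro borel_measurable_sum iW_meas) auto
      moreover have "(\<lambda>x. indicator D (x i) :: real) \<in> borel_measurable (PP n)"
        using measurable_compose[OF measurable_component_singleton[of i "{..<n}" "\<lambda>_. M"] borel_measurable_indicator[OF Ds]] i
        by simp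
      ultimately show "(\<lambda>x. indicator D (x i) - (\<Sum>j\<in>{..<n}-{i}. indicator D (x i) * W (x i) (x j) :: real)) \<in> borel_measurable (PP n)"
        by (intro borel_measurable_diff)
    qed
    then show ?thesis using L_alt by (simp add: fun_eq_iff[symmetric] L_alt[abs_def])
  qed
  have w01: "0 \<le> W (x i) (x j) \<and> W (x i) (x j) \<le> 1" if "x \<in> space (PP n)" "i < n" "j < n" for x i j
    using that by (auto intro!: Wnn Wle1 space_PP)
  have cD_b: "\<bar>cD x\<bar> \<le> n" for x
  proof -
    have "\<bar>cD x\<bar> \<le> (\<Sum>i<n. \<bar>indicator D (x i) :: real\<bar>)" unfolding cD_def by (rule sum_abs)
    also have "\<dots> \<le> (\<Sum>i<n. 1)" by (intro sum_mono) (auto simp: indicator_def)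
    finally show ?thesis by simp
  qed
  have L_b: "\<bar>L x\<bar> \<le> n * n" if x: "x \<in> space (PP n)" for x
  proof -
    have "\<bar>L x\<bar> \<le> (\<Sum>i<n. \<bar>indicator D (x i) - (\<Sum>j\<in>{..<n}-{i}. indicator D (x i) * W (x i) (x j) :: real)\<bar>)"
      unfolding L_alt by (rule sum_abs)
    also have "\<dots> \<le> (\<Sum>i<n. real n)"
    proof (rule sum_mono)
      fix i assume i: "i \<in> {..<n}"
      have "\<bar>(\<Sum>j\<in>{..<n}-{i}. indicator D (x i) * W (x i) (x j) :: real)\<bar> \<le> (\<Sum>j\<in>{..<n}-{i}. 1)"
        using i w01[OF x] by (intro order_trans[OF sum_abs] sum_mono) (auto simp: indicator_def abs_mult)
      also have "\<dots> = real n - 1" using i by (simp add: card_Diff_subset of_nat_diff)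
      finally show "\<bar>indicator D (x i) - (\<Sum>j\<in>{..<n}-{i}. indicator D (x i) * W (x i) (x j) :: real)\<bar> \<le> real n"
        by (auto simp: indicator_def abs_le_iff)
    qed
    finally show ?thesis by simp
  qed
  have int_cD2: "integrable (PP n) (\<lambda>x. (cD x)\<^sup>2)"
  proof (rule integrable_bdd[where B="(real n)^2"])
    fix x have "\<bar>cD x\<bar>\<^sup>2 \<le> (real n)\<^sup>2" using cD_b by (intro power_mono) auto
    then show "\<bar>(cD x)\<^sup>2\<bar> \<le> (real n)^2" by simp
  qed simp
  have int_L: "integrable (PP n) L" using L_b L_meas by (intro integrable_bdd[where B="real n * real n"]) auto
  have "ham_prob M W n = integral\<^sup>L (PP n) (hfun n)" by (rule ham_prob_h)
  also have "\<dots> \<le> integral\<^sup>L (PP n) F"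
  proof (rule integral_mono)
    show "integrable (PP n) (hfun n)" by (rule integrable_h)
    show "integrable (PP n) F" unfolding F_def using int_cD2 int_L
      by (intro integrable_divide Bochner_Integration.integrable_add Bochner_Integration.integrable_diff integrable_mult_right PPn.integrable_const)
    fix x assume x: "x \<in> space (PP n)"
    show "hfun n x \<le> F x"
      unfolding hfun_def F_def cD_def L_def
      by (rule pointwise_ii[OF _ _ t]) (auto intro!: Wsym space_PP x simp: w01[OF x])
  qed
  also have "\<dots> = ((\<integral>x. (cD x)\<^sup>2 \<partial>PP n) - 2 * t * integral\<^sup>L (PP n) L + t\<^sup>2) / t\<^sup>2"
    unfolding F_def using int_cD2 int_L PPn.prob_space by simp
  also have "\<dots> \<le> ((n * \<mu> + (n * \<mu>)\<^sup>2) - 2 * t * t + t\<^sup>2) / t\<^sup>2"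
  proof -
    have ind2: "(\<integral>y. (indicator D y :: real)\<^sup>2 \<partial>M) = \<mu>"
    proof -
      have "(\<lambda>y. (indicator D y :: real)\<^sup>2) = indicator D" by (auto simp: fun_eq_iff indicator_def)
      then show ?thesis by (simp add: \<mu>_def)
    qed
    have A: "(\<integral>x. (cD x)\<^sup>2 \<partial>PP n) \<le> n * \<mu> + (n * \<mu>)\<^sup>2"
      using sq_int[of "indicator D" n] ind2 unfolding cD_def by (simp add: \<mu>_def indicator_def)
    have B: "t \<le> integral\<^sup>L (PP n) L"
    proof -
      have ii1: "integrable (PP n) (\<lambda>x. indicator D (x i) :: real)" if "i < n" for i
        using that by (intro integrable_bdd[where B=1]) (auto simp: indicator_def)
      have ii2: "integrable (PP n) (\<lambda>x. indicator D (x i) * W (x i) (x j) :: real)" if "i < n" "j < n" for i j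
        using that w01 by (intro integrable_bdd[where B=1] iW_meas) (auto simp: indicator_def)
      have "integral\<^sup>L (PP n) L = (\<Sum>i<n. (\<integral>x. indicator D (x i) \<partial>PP n) - (\<Sum>j\<in>{..<n}-{i}. (\<integral>x. indicator D (x i) * W (x i) (x j) \<partial>PP n)))"
      proof -
        have "integral\<^sup>L (PP n) L = (\<Sum>i<n. (\<integral>x. indicator D (x i) - (\<Sum>j\<in>{..<n}-{i}. indicator D (x i) * W (x i) (x j)) \<partial>PP n))"
          unfolding L_alt[abs_def]
          by (intro Bochner_Integration.integral_sum Bochner_Integration.integrable_diff Bochner_Integration.integrable_sum ii1 ii2) auto
        also have "\<dots> = (\<Sum>i<n. (\<integral>x. indicator D (x i) \<partial>PP n) - (\<Sum>j\<in>{..<n}-{i}. (\<integral>x. indicator D (x i) * W (x i) (x j) \<partial>PP n)))"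
        proof (rule sum.cong[OF refl])
          fix i assume i: "i \<in> {..<n}"
          have s: "(\<integral>x. (\<Sum>j\<in>{..<n}-{i}. indicator D (x i) * W (x i) (x j)) \<partial>PP n) = (\<Sum>j\<in>{..<n}-{i}. (\<integral>x. indicator D (x i) * W (x i) (x j) \<partial>PP n))"
            using i by (intro Bochner_Integration.integral_sum ii2) auto
          show "(\<integral>x. indicator D (x i) - (\<Sum>j\<in>{..<n}-{i}. indicator D (x i) * W (x i) (x j)) \<partial>PP n) = (\<integral>x. indicator D (x i) \<partial>PP n) - (\<Sum>j\<in>{..<n}-{i}. (\<integral>x. indicator D (x i) * W (x i) (x j) \<partial>PP n))"
            unfolding s[symmetric] using i by (intro Bochner_Integration.integral_diff Bochner_Integration.integrable_sum ii1 ii2) auto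
        qed
        finally show ?thesis .
      qed
      also have "\<dots> \<ge> (\<Sum>i<n. \<mu> - (\<Sum>j\<in>{..<n}-{i}. \<mu> * a))"
      proof (rule sum_mono)
        fix i assume i: "i \<in> {..<n}"
        have e1: "(\<integral>x. indicator D (x i) \<partial>PP n) = \<mu>"
          using int1[of i n "indicator D"] i by (simp add: \<mu>_def)
        have "(\<Sum>j\<in>{..<n}-{i}. (\<integral>x. indicator D (x i) * W (x i) (x j) \<partial>PP n)) \<le> (\<Sum>j\<in>{..<n}-{i}. \<mu> * a)"
          using i indW[of i n _ a] unfolding D_def \<mu>_def by (intro sum_mono) auto
        then show "\<mu> - (\<Sum>j\<in>{..<n}-{i}. \<mu> * a) \<le> (\<integral>x. indicator D (x i) \<partial>PP n) - (\<Sum>j\<in>{..<n}-{i}. (\<integral>x. indicator D (x i) * W (x i) (x j) \<partial>PP n))"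
          using e1 by linarith
      qed
      also have "(\<Sum>i<n. \<mu> - (\<Sum>j\<in>{..<n}-{i}. \<mu> * a)) = n * (\<mu> - (real n - 1) * \<mu> * a)"
      proof -
        have "(\<Sum>i<n. \<mu> - (\<Sum>j\<in>{..<n}-{i}. \<mu> * a)) = (\<Sum>i<n. \<mu> - (real n - 1) * \<mu> * a)"
          by (intro sum.cong refl) (simp add: card_Diff_subset of_nat_diff)
        then show ?thesis by simp
      qed
      also have "\<dots> \<ge> t"
      proof -
        have "0 \<le> \<mu> * a" using mu0 eps n by (simp add: a_def)
        then have "(real n - 1) * (\<mu> * a) \<le> real n * (\<mu> * a)" by (intro mult_right_mono) auto
        then have "(real n - 1) * \<mu> * a \<le> real n * \<mu> * a" by (simp only: mult.assoc)
        also have "real n * \<mu> * a = \<mu> * \<epsilon>" using n by (simp add: a_def)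
        finally have "\<mu> - \<mu> * \<epsilon> \<le> \<mu> - (real n - 1) * \<mu> * a" by linarith
        then have "n * (\<mu> - \<mu> * \<epsilon>) \<le> n * (\<mu> - (real n - 1) * \<mu> * a)" by (intro mult_left_mono) auto
        then show ?thesis unfolding t_def by (simp add: algebra_simps)
      qed
      finally show ?thesis .
    qed
    have C: "2 * t * t \<le> 2 * t * integral\<^sup>L (PP n) L" using B t by (intro mult_left_mono) auto
    have "(\<integral>x. (cD x)\<^sup>2 \<partial>PP n) - 2 * t * integral\<^sup>L (PP n) L + t\<^sup>2 \<le> (n * \<mu> + (n * \<mu>)\<^sup>2) - 2 * t * t + t\<^sup>2"
      using A C by linarith
    then show ?thesis by (intro divide_right_mono) auto
  qed
  also have "\<dots> = (n * \<mu> + (n * \<mu>)\<^sup>2) / t\<^sup>2 - 1" using t by (simp add: field_simps power2_eq_square)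
  finally show ?thesis unfolding t_def \<mu>_def D_def a_def .
qed

end

context G begin

lemma lim_i:
  assumes "\<not> connected_graphon M W"
  shows "(\<lambda>n. ham_prob M W n) \<longlonglongrightarrow> 0"
proof -
  interpret prob_space M by (rule PS)
  interpret P2: pair_prob_space M M by unfold_locales
  obtain S T where S: "S \<in> sets M" and T: "T \<in> sets M" and disj: "S \<inter> T = {}" and cov: "S \<union> T = space M"
    and mS: "measure M S > 0" and mT: "measure M T > 0"
    and ni: "\<not> (\<integral>p \<in> S \<times> T. W (fst p) (snd p) \<partial>(M \<Otimes>\<^sub>M M)) > 0"
    using assms unfolding connected_graphon_def by blast
  define g where "g p = indicator (S \<times> T) p * W (fst p) (snd p)" for p :: "'a \<times> 'a"
  have g_meas: "g \<in> borel_measurable (M \<Otimes>\<^sub>M M)" unfolding g_def[abs_def] using S T by measurable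
  have g_nn: "0 \<le> g p" if "p \<in> space (M \<Otimes>\<^sub>M M)" for p
    using that by (auto simp: g_def indicator_def space_pair_measure intro!: Wnn)
  have g_int: "integrable (M \<Otimes>\<^sub>M M) g"
  proof (rule integrable_MM[where B=1, OF g_meas])
    fix p assume p: "p \<in> space (M \<Otimes>\<^sub>M M)"
    then have "fst p \<in> space M" "snd p \<in> space M" by (auto simp: space_pair_measure)
    then show "\<bar>g p\<bar> \<le> 1" using Wnn Wle1 by (auto simp: g_def indicator_def)
  qed
  have "(\<integral>p \<in> S \<times> T. W (fst p) (snd p) \<partial>(M \<Otimes>\<^sub>M M)) = integral\<^sup>L (M \<Otimes>\<^sub>M M) g"
    unfolding set_lebesgue_integral_def g_def[abs_def] by simp
  then have "integral\<^sup>L (M \<Otimes>\<^sub>M M) g \<le> 0" using ni by simp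
  moreover have "0 \<le> integral\<^sup>L (M \<Otimes>\<^sub>M M) g" using g_nn by (intro Bochner_Integration.integral_nonneg) auto
  ultimately have "integral\<^sup>L (M \<Otimes>\<^sub>M M) g = 0" by simp
  then have "AE p in M \<Otimes>\<^sub>M M. g p = 0"
    using integral_nonneg_eq_0_iff_AE[OF g_int] g_nn by (simp add: AE_I2)
  then have ae: "AE p in M \<Otimes>\<^sub>M M. p \<in> S \<times> T \<longrightarrow> W (fst p) (snd p) = 0"
    by eventually_elim (auto simp: g_def)
  have sum1: "measure M S + measure M T = 1"
    using finite_measure_Union[OF S T disj] cov prob_space by simp
  have b: "ham_prob M W n \<le> measure M S ^ n + measure M T ^ n" for n
    by (rule case_i[OF S T disj cov ae])
  have lim: "(\<lambda>n. measure M S ^ n + measure M T ^ n) \<longlonglongrightarrow> 0 + 0"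
    using sum1 mS mT by (intro tendsto_add LIMSEQ_power_zero) auto
  show ?thesis
    by (rule tendsto_sandwich[OF always_eventually always_eventually tendsto_const lim[simplified]]) (auto intro: ham_prob_nonneg b)
qed

lemma lim_iii:
  assumes "narrow_peninsula M W"
  shows "(\<lambda>n. ham_prob M W n) \<longlonglongrightarrow> 0"
proof -
  interpret prob_space M by (rule PS)
  obtain a A B where a: "0 < a" "a \<le> 1/2" and A: "A \<in> sets M" and B: "B \<in> sets M" and disj: "A \<inter> B = {}"
    and mA: "measure M A > a" and mB: "measure M B = 1 - 2 * a"
    and ae: "AE p in M \<Otimes>\<^sub>M M. p \<in> A \<times> (A \<union> B) \<longrightarrow> W (fst p) (snd p) = 0"
    using assms unfolding narrow_peninsula_def by blast
  have "measure M (space M - (A \<union> B)) = 1 - (measure M A + measure M B)"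
    using prob_compl[of "A \<union> B"] finite_measure_Union[OF A B disj] A B by simp
  then have mC: "measure M (space M - (A \<union> B)) = 2 * a - measure M A" using mB by simp
  define d where "d = measure M A - measure M (space M - (A \<union> B))"
  have d: "0 < d" using mC mA a by (simp add: d_def)
  have pos: "measure M A > measure M (space M - (A \<union> B))" using d by (simp add: d_def)
  have b: "ham_prob M W n \<le> (1 / d\<^sup>2) / real n" if "0 < n" for n
    using case_iii[OF A B disj ae pos that] by (simp add: d_def field_simps)
  have lim: "(\<lambda>n. (1 / d\<^sup>2) / real n) \<longlonglongrightarrow> 0" by (rule lim_const_over_n)
  show ?thesis
  proof (rule tendsto_sandwich[OF _ _ tendsto_const lim])
    show "\<forall>\<^sub>F n in sequentially. 0 \<le> ham_prob M W n" by (rule always_eventually) (auto intro: ham_prob_nonneg)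
    show "\<forall>\<^sub>F n in sequentially. ham_prob M W n \<le> 1 / d\<^sup>2 / real n"
      using eventually_gt_at_top[of 0] by eventually_elim (rule b)
  qed
qed

lemma lim_iv:
  assumes "\<exists>S T. S \<in> sets M \<and> T \<in> sets M \<and> S \<inter> T = {} \<and> S \<union> T = space M \<and>
               measure M S = 1/2 \<and> measure M T = 1/2 \<and>
               (AE p in M \<Otimes>\<^sub>M M. p \<in> (S \<times> S) \<union> (T \<times> T) \<longrightarrow> W (fst p) (snd p) = 0)"
  shows "(\<lambda>n. ham_prob M W n) \<longlonglongrightarrow> 0"
proof -
  obtain S T where S: "S \<in> sets M" and T: "T \<in> sets M" and disj: "S \<inter> T = {}" and cov: "S \<union> T = space M"
    and mS: "measure M S = 1/2" and mT: "measure M T = 1/2"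
    and ae: "AE p in M \<Otimes>\<^sub>M M. p \<in> (S \<times> S) \<union> (T \<times> T) \<longrightarrow> W (fst p) (snd p) = 0"
    using assms by blast
  have b: "ham_prob M W n \<le> inverse (sqrt (1 + real n))" for n
    using case_iv[OF S T disj cov mS mT ae, of n] by (simp add: add.commute divide_inverse)
  have "LIM n sequentially. 1 + real n :> at_top"
    by (rule filterlim_tendsto_add_at_top[OF tendsto_const filterlim_real_sequentially])
  then have "LIM n sequentially. sqrt (1 + real n) :> at_top"
    by (rule filterlim_compose[OF sqrt_at_top])
  then have lim: "(\<lambda>n. inverse (sqrt (1 + real n))) \<longlonglongrightarrow> 0"
    by (rule tendsto_inverse_0_at_top)
  show ?thesis
    by (rule tendsto_sandwich[OF always_eventually always_eventually tendsto_const lim]) (auto intro: ham_prob_nonneg b)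
qed

end

lemma arith_ii:
  fixes \<epsilon> \<delta> X :: real
  assumes e: "0 < \<epsilon>" "\<epsilon> \<le> 1/4" "\<epsilon> \<le> \<delta>/8" and d: "0 < \<delta>" and X: "4/\<delta> + 1 \<le> X"
  shows "(X + X\<^sup>2) / (X * (1 - \<epsilon>))\<^sup>2 - 1 < \<delta>"
proof -
  have X0: "0 < X" using X d by (smt (verit) divide_pos_pos)
  define q where "q = (1 - \<epsilon>)\<^sup>2"
  have q: "1/2 \<le> q"
  proof -
    have "3/4 \<le> 1 - \<epsilon>" using e by simp
    then have "(3/4)\<^sup>2 \<le> (1 - \<epsilon>)\<^sup>2" by (intro power_mono) auto
    then show ?thesis unfolding q_def by (simp add: power2_eq_square)
  qed
  have q0: "0 < q" using q by simp
  have eq: "(X + X\<^sup>2) / (X * (1 - \<epsilon>))\<^sup>2 - 1 = (1 / X) / q + (1 / q - 1)"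
  proof -
    have "(X * (1 - \<epsilon>))\<^sup>2 = X\<^sup>2 * q" unfolding q_def by (simp add: power_mult_distrib)
    then show ?thesis using X0 q0 by (simp add: field_simps power2_eq_square)
  qed
  have t1: "(1 / X) / q \<le> 2 / X"
    using q X0 by (simp add: field_simps)
  have "2 / X < \<delta> / 2"
  proof -
    have "4 / \<delta> < X" using X by simp
    then have "4 < X * \<delta>" using d by (simp add: divide_less_eq)
    then show ?thesis using X0 d by (simp add: field_simps)
  qed
  have t2: "1 / q - 1 \<le> 4 * \<epsilon>"
  proof -
    have "(1 + 4 * \<epsilon>) * q - 1 = \<epsilon> * (2 - 7 * \<epsilon> + 4 * \<epsilon>\<^sup>2)"
      unfolding q_def by (simp add: power2_eq_square algebra_simps)
    moreover have "0 \<le> 2 - 7 * \<epsilon> + 4 * \<epsilon>\<^sup>2" using e zero_le_power2[of \<epsilon>] by linarith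
    then have "0 \<le> \<epsilon> * (2 - 7 * \<epsilon> + 4 * \<epsilon>\<^sup>2)" using e by simp
    ultimately have "1 \<le> (1 + 4 * \<epsilon>) * q" by linarith
    then have "1 / q \<le> 1 + 4 * \<epsilon>" using q0 by (simp add: divide_le_eq mult.commute)
    then show ?thesis by simp
  qed
  show ?thesis unfolding eq using t1 t2 \<open>2 / X < \<delta> / 2\<close> e by linarith
qed

context G begin

lemma lim_ii:
  assumes lim: "filterlim (\<lambda>\<alpha>. measure M (low_deg_set M W \<alpha>) / \<alpha>) at_top (at_right 0)"
  shows "(\<lambda>n. ham_prob M W n) \<longlonglongrightarrow> 0"
proof (rule order_tendstoI)
  fix a :: real assume "a < 0"
  then show "\<forall>\<^sub>F n in sequentially. a < ham_prob M W n"
    by (intro always_eventually allI) (smt (verit) ham_prob_nonneg)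
next
  fix \<delta> :: real assume d: "0 < \<delta>"
  define \<epsilon> where "\<epsilon> = min (1/4) (\<delta>/8)"
  have e: "0 < \<epsilon>" "\<epsilon> \<le> 1/4" "\<epsilon> \<le> \<delta>/8" "\<epsilon> < 1" using d by (auto simp: \<epsilon>_def)
  define K where "K = 4/\<delta> + 1"
  have K: "0 < K" using d by (simp add: K_def add_pos_nonneg)
  have "\<forall>\<^sub>F \<alpha> in at_right 0. K / \<epsilon> \<le> measure M (low_deg_set M W \<alpha>) / \<alpha>"
    using lim unfolding filterlim_at_top by blast
  then obtain b :: real where b: "0 < b" and bb: "\<And>\<alpha>. 0 < \<alpha> \<Longrightarrow> \<alpha> < b \<Longrightarrow> K / \<epsilon> \<le> measure M (low_deg_set M W \<alpha>) / \<alpha>"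
    unfolding eventually_at_right_field by blast
  obtain N :: nat where N: "\<epsilon> / b < real N" using reals_Archimedean2 by blast
  have "\<forall>\<^sub>F n in sequentially. ham_prob M W n < \<delta>"
  proof (rule eventually_sequentiallyI[of "Suc N"])
    fix n assume n: "Suc N \<le> n"
    then have n0: "0 < n" by simp
    have "\<epsilon> / b < real n" using N n by linarith
    then have al: "\<epsilon> / real n < b" using b n0 by (simp add: divide_less_eq mult.commute)
    have al0: "0 < \<epsilon> / real n" using e n0 by simp
    define \<mu> where "\<mu> = measure M (low_deg_set M W (\<epsilon> / real n))"
    have "K / \<epsilon> \<le> \<mu> / (\<epsilon> / real n)" using bb[OF al0 al] unfolding \<mu>_def .
    then have Kle: "K \<le> real n * \<mu>" using e n0 by (simp add: field_simps)
    then have mu0: "0 < \<mu>" using K n0 by (smt (verit) mult_nonneg_nonpos of_nat_0_le_iff)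
    have "ham_prob M W n \<le> (real n * \<mu> + (real n * \<mu>)\<^sup>2) / (real n * \<mu> * (1 - \<epsilon>))\<^sup>2 - 1"
      unfolding \<mu>_def by (rule case_ii_bound[OF e(1) e(4) n0 mu0[unfolded \<mu>_def]])
    also have "\<dots> < \<delta>" using arith_ii[OF e(1-3) d] Kle unfolding K_def by simp
    finally show "ham_prob M W n < \<delta>" .
  qed
  then show "\<forall>\<^sub>F n in sequentially. ham_prob M W n < \<delta>" .
qed

end

theorem proposition6p1:
  fixes M :: "'a measure" and W :: "'a \<Rightarrow> 'a \<Rightarrow> real"
  assumes "atomless_standard_prob_space M"
    and "graphon M W"
    and "\<not> connected_graphon M W
         \<or> filterlim (\<lambda>\<alpha>. measure M (low_deg_set M W \<alpha>) / \<alpha>) at_top (at_right 0)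
         \<or> narrow_peninsula M W
         \<or> (\<exists>S T. S \<in> sets M \<and> T \<in> sets M \<and> S \<inter> T = {} \<and> S \<union> T = space M \<and>
               measure M S = 1/2 \<and> measure M T = 1/2 \<and>
               (AE p in M \<Otimes>\<^sub>M M. p \<in> (S \<times> S) \<union> (T \<times> T) \<longrightarrow> W (fst p) (snd p) = 0))"
  shows "(\<lambda>n. ham_prob M W n) \<longlonglongrightarrow> 0"
proof -
  have ps: "prob_space M" using assms(1) by (simp add: atomless_standard_prob_space_def)
  interpret G M W by (rule G.intro[OF ps assms(2)])
  show ?thesis using assms(3) lim_i lim_ii lim_iii lim_iv by blast
qed

end
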